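(* Let $n\geqslant2$, $0<\varepsilon<1$, $i_0,j_0\in\{0,\dots,n\}$, $B\geqslant1$, $Q=\sqrt B$. Let $\boldsymbol{x},\boldsymbol{y}\in\mathbf{Z}^{n+1}$ with $x_{i_0},y_{j_0}\geqslant1$, $|x_i|\leqslant x_{i_0}$ and $|y_j|\leqslant y_{j_0}$ for all $i,j$, and put $P=B/(x_{i_0}y_{j_0})$. For an integer $q\geqslant1$ and $\boldsymbol{c}\in\mathbf{Z}^{n+1}\setminus\{\boldsymbol 0\}$ let \[I(\boldsymbol{c})=\int_{\mathbf{R}^{n+1}}\underline{w}_\varepsilon(\boldsymbol{u})\,h\Big(\frac qQ,\frac{\sum_kx_ky_ku_k}{x_{i_0}y_{j_0}}\Big)e_q(-P\,\boldsymbol{c}.\boldsymbol{u})\,d\boldsymbol{u}.\] Then for every integer $N\geqslant0$, \[I(\boldsymbol{c})\ll\frac Qq\Big(\frac{Q}{P|\boldsymbol{c}|}\Big)^N=\frac Qq\Big(\frac{x_{i_0}y_{j_0}}{\sqrt B\,|\boldsymbol{c}|}\Big)^N,\] with an implied constant depending only on $n,N,\varepsilon$.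
   Context: $|\boldsymbol{c}|=\max_k|c_k|$. $e(x)=\exp(2i\pi x)$, $e_q(x)=e(x/q)$. $\omega_0(x)=\exp(-(1-x^2)^{-1})$ for $|x|<1$, $0$ otherwise; $c_0=\int\omega_0$; $\omega(x)=4c_0^{-1}\omega_0(4x-3)$; $h(x,y)=\sum_{j\geqslant1}\frac1{xj}(\omega(xj)-\omega(\frac{|y|}{xj}))$ for $x>0$. $\underline{\omega}_\varepsilon(x)=c_0^{-1}\int_{-\infty}^{x/\varepsilon-1}\omega_0(y)dy$, and $\underline{w}_\varepsilon(\boldsymbol{u})=\prod_{k=0}^n\underline{\omega}_\varepsilon(1-|u_k|)\underline{\omega}_\varepsilon(|u_k|-\frac1P)$. *)

theory Defs
  imports "HOL-Analysis.Analysis"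
begin

definition e_char :: "real \<Rightarrow> complex" where
  "e_char x = exp (2 * pi * \<i> * complex_of_real x)"

definition e_q :: "real \<Rightarrow> real \<Rightarrow> complex" where
  "e_q q x = e_char (x / q)"

definition omega0 :: "real \<Rightarrow> real" where
  "omega0 x = (if \<bar>x\<bar> < 1 then exp (- 1 / (1 - x\<^sup>2)) else 0)"

definition c0 :: real where
  "c0 = integral\<^sup>L lborel omega0"

definition omega :: "real \<Rightarrow> real" where
  "omega x = 4 / c0 * omega0 (4 * x - 3)"

definition h_fun :: "real \<Rightarrow> real \<Rightarrow> real" where
  "h_fun x y = (\<Sum>j. 1 / (x * real (Suc j)) *
      (omega (x * real (Suc j)) - omega (\<bar>y\<bar> / (x * real (Suc j)))))"

definition omega_low :: "real \<Rightarrow> real \<Rightarrow> real" where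
  "omega_low \<epsilon> x = 1 / c0 * (LINT y:{..x / \<epsilon> - 1}|lborel. omega0 y)"

definition w_low :: "nat \<Rightarrow> real \<Rightarrow> real \<Rightarrow> (nat \<Rightarrow> real) \<Rightarrow> real" where
  "w_low n \<epsilon> P u = (\<Prod>k\<in>{0..n}. omega_low \<epsilon> (1 - \<bar>u k\<bar>) * omega_low \<epsilon> (\<bar>u k\<bar> - 1 / P))"

definition supnorm :: "nat \<Rightarrow> (nat \<Rightarrow> int) \<Rightarrow> real" where
  "supnorm n c = Max ((\<lambda>k. real_of_int \<bar>c k\<bar>) ` {0..n})"

definition I_int :: "nat \<Rightarrow> real \<Rightarrow> real \<Rightarrow> (nat \<Rightarrow> int) \<Rightarrow> (nat \<Rightarrow> int) \<Rightarrow> nat \<Rightarrow> nat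
     \<Rightarrow> nat \<Rightarrow> (nat \<Rightarrow> int) \<Rightarrow> complex" where
  "I_int n \<epsilon> B x y i0 j0 q c =
    (let Q = sqrt B; P = B / (real_of_int (x i0) * real_of_int (y j0)) in
     integral\<^sup>L (PiM {0..n} (\<lambda>_. lborel))
       (\<lambda>u. complex_of_real (w_low n \<epsilon> P u *
              h_fun (real q / Q) ((\<Sum>k\<in>{0..n}. real_of_int (x k * y k) * u k)
                                   / (real_of_int (x i0) * real_of_int (y j0))))
            * e_q (real q) (- P * (\<Sum>k\<in>{0..n}. real_of_int (c k) * u k))))"

end

theory Submission
  imports Defs "HOL-Computational_Algebra.Polynomial"
begin


definition dchain :: "(nat \<Rightarrow> real \<Rightarrow> real) \<Rightarrow> bool" where
  "dchain D \<longleftrightarrow> (\<forall>m x. (D m has_real_derivative D (Suc m) x) (at x))"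

lemma dchainD: "dchain D \<Longrightarrow> (D m has_real_derivative D (Suc m) x) (at x)"
  by (simp add: dchain_def)

lemma dchain_cont: "dchain D \<Longrightarrow> continuous_on S (D m)"
  by (meson DERIV_isCont continuous_at_imp_continuous_on dchainD)

lemma dchain_affine:
  assumes "dchain D"
  shows "dchain (\<lambda>m x. a^m * D m (a*x+b))"
  unfolding dchain_def
proof (intro allI)
  fix m x
  have "((\<lambda>x. D m (a*x+b)) has_real_derivative D (Suc m) (a*x+b) * a) (at x)"
    by (rule DERIV_chain2[OF dchainD[OF assms]]) (auto intro!: derivative_eq_intros)
  from DERIV_cmult[OF this, of "a^m"]
  show "((\<lambda>x. a^m * D m (a*x+b)) has_real_derivative a^Suc m * D (Suc m) (a*x+b)) (at x)"
     by (simp add: algebra_simps)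
qed

lemma dchain_scale:
  assumes "dchain D" shows "dchain (\<lambda>m x. c * D m x)"
  using assms unfolding dchain_def by (auto intro: DERIV_cmult)

lemma dchain_add:
  assumes "dchain D" "dchain E" shows "dchain (\<lambda>m x. D m x + E m x)"
  using assms unfolding dchain_def by (auto intro: DERIV_add)

lemma dchain_sum:
  assumes "\<And>j. j \<in> J \<Longrightarrow> dchain (D j)" shows "dchain (\<lambda>m x. \<Sum>j\<in>J. D j m x)"
  using assms unfolding dchain_def by (auto intro!: DERIV_sum)

lemma dchain_const: "dchain (\<lambda>m x. if m = 0 then c else 0)"
  unfolding dchain_def by auto

lemma dchain_zero: "dchain (\<lambda>m x. 0)"
  unfolding dchain_def by auto

lemma Suc_choose': "Suc n choose k = (n choose k) + (if k = 0 then 0 else (n choose (k-1)))"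
  by (cases k) simp_all

lemma dchain_mult:
  assumes "dchain D" "dchain E"
  shows "dchain (\<lambda>m x. \<Sum>i=0..m. real (m choose i) * D i x * E (m-i) x)"
  unfolding dchain_def
proof (intro allI)
  fix n z
  have sumeq: "(\<Sum>i = 0..n.
               real (n choose i) * (D (Suc i) z * E (n-i) z + E (Suc (n-i)) z * D i z)) =
            E 0 z * D (Suc n) z + (\<Sum>i = 0..n. D i z * (real (Suc n choose i) * E (Suc n - i) z))"
    apply (simp add: Suc_choose' algebra_simps sum.distrib)
    apply (subst (4) sum_Suc_reindex)
    apply (auto simp: algebra_simps Suc_diff_le intro: sum.cong)
    done
  have "((\<lambda>x. \<Sum>i=0..n. real (n choose i) * D i x * E (n-i) x) has_real_derivative
     (\<Sum>i = 0..n. real (n choose i) * (D (Suc i) z * E (n-i) z + E (Suc (n-i)) z * D i z))) (at z)"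
  proof (intro DERIV_sum)
    fix i
    have "((\<lambda>x. D i x * E (n-i) x) has_real_derivative D (Suc i) z * E (n-i) z + D i z * E (Suc (n-i)) z) (at z)"
      using DERIV_mult[OF dchainD[OF assms(1), of i z] dchainD[OF assms(2), of "n-i" z]] by (simp add: algebra_simps)
    from DERIV_cmult[OF this, of "real (n choose i)"]
    show "((\<lambda>x. real (n choose i) * D i x * E (n-i) x) has_real_derivative
       real (n choose i) * (D (Suc i) z * E (n-i) z + E (Suc (n-i)) z * D i z)) (at z)"
      by (simp add: algebra_simps)
  qed
  moreover have "(\<Sum>i = 0..n. real (n choose i) * (D (Suc i) z * E (n-i) z + E (Suc (n-i)) z * D i z))
     = (\<Sum>i = 0..Suc n. real (Suc n choose i) * D i z * E (Suc n - i) z)"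
    using sumeq by (simp add: algebra_simps)
  ultimately show "((\<lambda>x. \<Sum>i=0..n. real (n choose i) * D i x * E (n-i) x) has_real_derivative
     (\<Sum>i = 0..Suc n. real (Suc n choose i) * D i z * E (Suc n - i) z)) (at z)" by simp
qed

definition fdiff :: "real \<Rightarrow> (real \<Rightarrow> 'a::ab_group_add) \<Rightarrow> real \<Rightarrow> 'a" where
  "fdiff d g t = g t - g (t + d)"

lemma fdiff_bound:
  assumes "dchain D" "\<And>x. \<bar>D m x\<bar> \<le> M"
  shows "\<bar>(fdiff d ^^ m) (D 0) t\<bar> \<le> \<bar>d\<bar>^m * M"
  using assms
proof (induction m arbitrary: D M t)
  case 0 then show ?case by simp
next
  case (Suc m)
  define D' where "D' = (\<lambda>j x. D j x - D j (x + d))"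
  have dc: "dchain D'"
    unfolding D'_def dchain_def
  proof (intro allI)
    fix j x
    have "((\<lambda>x. D j (x + d)) has_real_derivative D (Suc j) (x+d)) (at x)"
      using dchainD[OF dchain_affine[OF Suc.prems(1), of 1 d], of j x] by (simp add: add.commute)
    then show "((\<lambda>x. D j x - D j (x + d)) has_real_derivative D (Suc j) x - D (Suc j) (x + d)) (at x)"
      by (intro DERIV_diff dchainD[OF Suc.prems(1)])
  qed
  have bd: "\<bar>D' m x\<bar> \<le> \<bar>d\<bar> * M" for x
  proof -
    have "norm (D m x - D m (x+d)) \<le> M * norm (x - (x+d))"
      by (rule field_differentiable_bound[of UNIV])
         (auto intro: has_field_derivative_at_within dchainD[OF Suc.prems(1)] Suc.prems(2))
    then show ?thesis by (simp add: D'_def mult.commute)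
  qed
  have eq: "(fdiff d ^^ m) (D' 0) = (fdiff d ^^ Suc m) (D 0)"
  proof -
    have "D' 0 = fdiff d (D 0)" by (auto simp: D'_def fdiff_def)
    then show ?thesis by (simp add: funpow_Suc_right del: funpow.simps)
  qed
  have "\<bar>(fdiff d ^^ m) (D' 0) t\<bar> \<le> \<bar>d\<bar>^m * (\<bar>d\<bar> * M)"
    by (rule Suc.IH[OF dc bd])
  then show ?case using eq by (simp add: algebra_simps)
qed



lemma exp_ge_pow_fact:
  fixes t :: real assumes "t \<ge> 0" shows "t^k / fact k \<le> exp t"
proof -
  have s: "summable (\<lambda>n. t^n / fact n)"
    using summable_exp_generic[of t] by (simp add: divide_inverse mult.commute)
  have "t^k / fact k = (\<Sum>n\<in>{k}. t^n / fact n)" by simp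
  also have "\<dots> \<le> (\<Sum>n. t^n / fact n)"
    by (rule sum_le_suminf[OF s]) (use assms in auto)
  also have "\<dots> = exp t"
    by (simp add: exp_def divide_inverse mult.commute scaleR_conv_of_real)
  finally show ?thesis .
qed

lemma exp_neg_inv_le:
  fixes s :: real assumes "s > 0" shows "exp (- 1 / s) \<le> fact k * s^k"
proof -
  have "(1/s)^k / fact k \<le> exp (1/s)" by (rule exp_ge_pow_fact) (use assms in simp)
  then have "1 / (fact k * s^k) \<le> exp (1/s)" by (simp add: power_one_over mult.commute)
  then have "1 / exp (1/s) \<le> fact k * s^k"
    using assms by (simp add: field_simps)
  then show ?thesis by (simp add: exp_minus inverse_eq_divide)
qed

lemma deriv_zero_quadratic:
  fixes f :: "real \<Rightarrow> real"
  assumes "f x = 0" "\<And>y. \<bar>f y\<bar> \<le> K * (y - x)^2"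
  shows "(f has_real_derivative 0) (at x)"
  unfolding has_field_derivative_iff
proof (rule Lim_null_comparison)
  show "\<forall>\<^sub>F y in at x. norm ((f y - f x) / (y - x)) \<le> \<bar>K\<bar> * \<bar>y - x\<bar>"
  proof (intro always_eventually allI)
    fix y
    show "norm ((f y - f x) / (y - x)) \<le> \<bar>K\<bar> * \<bar>y - x\<bar>"
    proof (cases "y = x")
      case False
      have "\<bar>f y\<bar> \<le> \<bar>K\<bar> * \<bar>y - x\<bar> * \<bar>y - x\<bar>"
        using assms(2)[of y] abs_ge_self[of K] mult_right_mono[of K "\<bar>K\<bar>" "(y-x)^2"]
        by (simp add: power2_eq_square abs_mult_self_eq mult.assoc)
      then show ?thesis using False assms(1) by (simp add: divide_le_eq)
    qed simp
  qed
  show "((\<lambda>y. \<bar>K\<bar> * \<bar>y - x\<bar>) \<longlongrightarrow> 0) (at x)"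
    by (rule tendsto_eq_intros | simp)+
qed

definition spoly :: "real poly" where "spoly = [:1, 0, -1:]"

fun pw :: "nat \<Rightarrow> real poly" where
  "pw 0 = 1"
| "pw (Suc m) = pderiv (pw m) * spoly^2 + smult (4 * real m) ([:0,1:] * pw m * spoly) - smult 2 ([:0,1:] * pw m)"

definition Dw0 :: "nat \<Rightarrow> real \<Rightarrow> real" where
  "Dw0 m x = (if \<bar>x\<bar> < 1 then poly (pw m) x / (1 - x^2)^(2*m) * exp (- 1 / (1 - x^2)) else 0)"

lemma poly_spoly: "poly spoly x = 1 - x^2"
  by (simp add: spoly_def power2_eq_square)

lemma Dw0_0: "Dw0 0 = omega0"
  by (auto simp: Dw0_def omega0_def fun_eq_iff)

lemma Dw0_bound:
  "\<exists>C. C \<ge> 0 \<and> (\<forall>x. \<bar>x\<bar> < 1 \<longrightarrow> \<bar>Dw0 m x\<bar> \<le> C * (1 - x^2)^2)"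
proof -
  have "compact (poly (pw m) ` {-1..1})"
    by (intro compact_continuous_image continuous_intros) auto
  then obtain Cp where Cp: "\<And>x. x \<in> {-1..1} \<Longrightarrow> \<bar>poly (pw m) x\<bar> \<le> Cp"
    using compact_imp_bounded[THEN bounded_real[THEN iffD1]] by (meson image_eqI)
  have Cp0: "Cp \<ge> 0" using Cp[of 0] by simp
  show ?thesis
  proof (intro exI conjI allI impI)
    show "Cp * fact (2*m+2) \<ge> 0" using Cp0 by simp
    fix x :: real assume x: "\<bar>x\<bar> < 1"
    define s where "s = 1 - x^2"
    have s0: "s > 0" using x by (simp add: s_def abs_square_less_1)
    have hp: "\<bar>poly (pw m) x\<bar> \<le> Cp" using x by (intro Cp) (auto simp: abs_less_iff)
    have "\<bar>Dw0 m x\<bar> = \<bar>poly (pw m) x\<bar> / s^(2*m) * exp (- 1 / s)"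
      using x s0 by (simp add: Dw0_def s_def abs_mult abs_divide)
    also have "\<dots> \<le> Cp / s^(2*m) * (fact (2*m+2) * s^(2*m+2))"
      using hp x s0 Cp0
      by (intro mult_mono divide_right_mono exp_neg_inv_le) auto
    also have "\<dots> = Cp * fact (2*m+2) * s^2"
      using s0 by (simp add: power_add field_simps power2_eq_square)
    finally show "\<bar>Dw0 m x\<bar> \<le> Cp * fact (2*m+2) * (1 - x^2)^2" by (simp add: s_def)
  qed
qed

lemma Dw0_deriv_inside:
  assumes x: "\<bar>x\<bar> < 1"
  shows "(Dw0 m has_real_derivative Dw0 (Suc m) x) (at x)"
proof -
  define s where "s = 1 - x^2"
  have s0: "s > 0" using x by (simp add: s_def abs_square_less_1)
  define r where "r = (\<lambda>x::real. inverse (1 - x^2))"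
  define p where "p = pw m"
  have s_ne: "1 - x^2 \<noteq> 0" using s0 by (simp add: s_def)
  have dq: "((\<lambda>x::real. 1 - x^2) has_real_derivative -(2*x)) (at x)"
    by (auto intro!: derivative_eq_intros)
  have dr: "(r has_real_derivative 2*x * r x ^ 2) (at x)"
    using DERIV_inverse_fun[OF dq s_ne] unfolding r_def
    by (simp add: power2_eq_square inverse_mult_distrib)
  have d2: "((\<lambda>x. r x ^ (2*m)) has_real_derivative real (2*m) * (2*x * r x ^ 2 * r x ^ (2*m - 1))) (at x)"
    using DERIV_power[OF dr, of "2*m"] by simp
  have d3: "((\<lambda>x. exp (- r x)) has_real_derivative exp (- r x) * (- (2*x * r x ^ 2))) (at x)"
    using DERIV_fun_exp[OF DERIV_minus[OF dr]] by simp
  have d: "((\<lambda>x. poly p x * r x ^ (2*m) * exp (- r x)) has_real_derivative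
      (poly (pderiv p) x * r x ^ (2*m) + real (2*m) * (2*x * r x ^ 2 * r x ^ (2*m - 1)) * poly p x) * exp (- r x)
      + exp (- r x) * (- (2*x * r x ^ 2)) * (poly p x * r x ^ (2*m))) (at x)"
    by (rule DERIV_mult[OF DERIV_mult[OF poly_DERIV d2] d3])
  have eqD: "(poly (pderiv p) x * r x ^ (2*m) + real (2*m) * (2*x * r x ^ 2 * r x ^ (2*m - 1)) * poly p x) * exp (- r x)
      + exp (- r x) * (- (2*x * r x ^ 2)) * (poly p x * r x ^ (2*m)) = Dw0 (Suc m) x"
  proof -
    have rx: "r x = 1 / s" by (simp add: r_def s_def inverse_eq_divide)
    have e: "exp (- r x) = exp (- 1 / (1 - x^2))" by (simp add: rx s_def)
    have A: "real (2*m) * (2*x * r x ^ 2 * r x ^ (2*m - 1)) = 4*real m*x * r x^(2*m) * r x"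
      by (cases m) (simp_all add: power2_eq_square algebra_simps)
    have B: "poly (pw (Suc m)) x = poly (pderiv p) x * s^2 + 4*real m*x*poly p x * s - 2*x*poly p x"
      by (simp add: p_def poly_spoly s_def)
    have rt: "r x ^ (2*m) = 1 / s^(2*m)" by (simp add: rx power_one_over)
    have C: "Dw0 (Suc m) x = (poly (pderiv p) x * s^2 + 4*real m*x*poly p x * s - 2*x*poly p x) / (s^(2*m) * s^2) * exp (- r x)"
      using x unfolding Dw0_def B e by (simp add: s_def power_add power2_eq_square mult_ac)
    show ?thesis unfolding C A using s0
      by (simp add: rt rx field_simps power2_eq_square)
  qed
  have "(Dw0 m has_real_derivative Dw0 (Suc m) x) (at x)"
  proof (rule has_field_derivative_transform_within_open[OF d[unfolded eqD], of "{y. \<bar>y\<bar> < 1}"])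
    show "open {y::real. \<bar>y\<bar> < 1}" by (intro open_Collect_less continuous_intros)
    show "x \<in> {y. \<bar>y\<bar> < 1}" using x by simp
    fix y :: real assume "y \<in> {y. \<bar>y\<bar> < 1}"
    then show "poly p y * r y ^ (2*m) * exp (- r y) = Dw0 m y"
      by (simp add: Dw0_def r_def p_def inverse_eq_divide power_one_over)
  qed
  then show ?thesis .
qed

lemma one_minus_sq_le:
  fixes x y :: real assumes y: "\<bar>y\<bar> < 1" and x: "\<bar>x\<bar> \<ge> 1"
  shows "(1 - y^2)^2 \<le> 4 * (y - x)^2"
proof -
  have "1 - y^2 \<le> 2 * \<bar>y - x\<bar>"
  proof (cases "x \<ge> 1")
    case True
    have "(1 - y) * (1 + y) \<le> (x - y) * 2"
      using y True by (intro mult_mono) (auto simp: abs_less_iff)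
    then show ?thesis using y True by (auto simp: power2_eq_square algebra_simps abs_less_iff)
  next
    case False
    then have xm: "x \<le> -1" using x by auto
    have "(1 + y) * (1 - y) \<le> (y - x) * 2"
      using y xm by (intro mult_mono) (auto simp: abs_less_iff)
    then show ?thesis using y xm by (auto simp: power2_eq_square algebra_simps abs_less_iff)
  qed
  moreover have "0 \<le> 1 - y^2" using y by (simp add: abs_square_less_1 less_imp_le)
  ultimately have "(1 - y^2)^2 \<le> (2 * \<bar>y - x\<bar>)^2" by (intro power_mono) auto
  then show ?thesis by (simp add: power_mult_distrib)
qed

lemma Dw0_deriv_outside:
  assumes x: "\<bar>x\<bar> \<ge> 1"
  shows "(Dw0 m has_real_derivative Dw0 (Suc m) x) (at x)"
proof -
  obtain C where C: "C \<ge> 0" "\<And>y. \<bar>y\<bar> < 1 \<Longrightarrow> \<bar>Dw0 m y\<bar> \<le> C * (1 - y^2)^2"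
    using Dw0_bound[of m] by auto
  have "(Dw0 m has_real_derivative 0) (at x)"
  proof (rule deriv_zero_quadratic[of _ _ "4*C"])
    show "Dw0 m x = 0" using x by (simp add: Dw0_def)
    fix y :: real
    show "\<bar>Dw0 m y\<bar> \<le> 4 * C * (y - x)^2"
    proof (cases "\<bar>y\<bar> < 1")
      case True
      have "\<bar>Dw0 m y\<bar> \<le> C * (1 - y^2)^2" by (rule C(2)[OF True])
      also have "\<dots> \<le> C * (4 * (y - x)^2)"
        by (intro mult_left_mono one_minus_sq_le True x C(1))
      finally show ?thesis by simp
    qed (use C in \<open>auto simp: Dw0_def\<close>)
  qed
  then show ?thesis using x by (simp add: Dw0_def)
qed

lemma dchain_Dw0: "dchain Dw0"
  unfolding dchain_def
  by (metis Dw0_deriv_inside Dw0_deriv_outside not_less)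

lemma Dw0_global_bound: "\<exists>C. \<forall>x. \<bar>Dw0 m x\<bar> \<le> C"
proof -
  obtain C where C: "C \<ge> 0" "\<And>y. \<bar>y\<bar> < 1 \<Longrightarrow> \<bar>Dw0 m y\<bar> \<le> C * (1 - y^2)^2"
    using Dw0_bound[of m] by auto
  have "\<bar>Dw0 m x\<bar> \<le> C" for x
  proof (cases "\<bar>x\<bar> < 1")
    case True
    have "(1 - x^2)^2 \<le> 1"
      using True by (intro power_le_one) (auto simp: abs_square_less_1 less_imp_le)
    then have "C * (1 - x^2)^2 \<le> C" using C(1) by (simp add: mult_left_le)
    then show ?thesis using C(2)[OF True] by linarith
  qed (use C in \<open>auto simp: Dw0_def\<close>)
  then show ?thesis by blast
qed

lemma Dw0_vanish: "\<bar>x\<bar> \<ge> 1 \<Longrightarrow> Dw0 m x = 0"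
  by (simp add: Dw0_def)



lemma bounded_if_deriv_vanish:
  fixes f g :: "real \<Rightarrow> real"
  assumes d: "\<And>x. (f has_real_derivative g x) (at x)" and v: "\<And>x. \<bar>x\<bar> \<ge> 1 \<Longrightarrow> g x = 0"
  shows "\<exists>C. \<forall>x. \<bar>f x\<bar> \<le> C"
proof -
  have cont: "continuous_on S f" for S
    using d by (meson DERIV_isCont continuous_at_imp_continuous_on)
  obtain c1 where c1: "\<forall>x\<in>{1..}. f x = c1"
    using has_field_derivative_zero_constant[of "{1..}" f]
    by (metis d v atLeast_iff convex_real_interval(1) has_field_derivative_at_within abs_of_nonneg order_trans zero_le_one)
  obtain c2 where c2: "\<forall>x\<in>{..-1}. f x = c2"
    using has_field_derivative_zero_constant[of "{..-1}" f] d v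
    by (smt (verit) atMost_iff convex_real_interval(2) has_field_derivative_at_within)
  have "compact (f ` {-1..1})" by (intro compact_continuous_image cont) auto
  then obtain M where M: "\<And>x. x \<in> {-1..1} \<Longrightarrow> \<bar>f x\<bar> \<le> M"
    using compact_imp_bounded[THEN bounded_real[THEN iffD1]] by (meson image_eqI)
  have "\<bar>f x\<bar> \<le> M" for x
  proof -
    consider "x \<ge> 1" | "x \<le> -1" | "x \<in> {-1..1}" by fastforce
    then show ?thesis
    proof cases
      case 1 then show ?thesis using c1 M[of 1] by auto
    next
      case 2 then show ?thesis using c2 M[of "-1"] by auto
    qed (rule M)
  qed
  then show ?thesis by blast
qed

definition Lam :: "real \<Rightarrow> real" where
  "Lam z = (LINT y:{..z}|lborel. omega0 y)"

lemma omega0_cont: "continuous_on S omega0"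
  using dchain_cont[OF dchain_Dw0, of S 0] by (simp add: Dw0_0)

lemma omega0_vanish: "\<bar>x\<bar> \<ge> 1 \<Longrightarrow> omega0 x = 0"
  by (simp add: omega0_def)

lemma Lam_eq: "Lam z = integral {-2..z} omega0"
proof (cases "z < -2")
  case True
  have "(\<lambda>y. indicator {..z} y *\<^sub>R omega0 y) = (\<lambda>y. 0)"
    using True by (auto simp: fun_eq_iff indicator_def omega0_vanish)
  then have "Lam z = 0" by (simp add: Lam_def set_lebesgue_integral_def)
  then show ?thesis using True by simp
next
  case False
  have eq: "(\<lambda>y. indicator {..z} y *\<^sub>R omega0 y) = (\<lambda>y. indicator {-2..z} y *\<^sub>R omega0 y)"
    using False by (auto simp: fun_eq_iff indicator_def omega0_vanish)
  have "set_integrable lborel {-2..z} omega0"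
    unfolding set_integrable_def by (rule borel_integrable_compact) (auto intro: omega0_cont)
  then have "(LINT y:{-2..z}|lborel. omega0 y) = integral {-2..z} omega0"
    by (rule set_borel_integral_eq_integral)
  then show ?thesis unfolding Lam_def set_lebesgue_integral_def eq .
qed

lemma Lam_deriv: "(Lam has_real_derivative omega0 z) (at z)"
proof (cases "z < -1")
  case True
  have "((\<lambda>w. 0) has_real_derivative omega0 z) (at z)"
    using True by (simp add: omega0_vanish)
  then show ?thesis
  proof (rule has_field_derivative_transform_within_open[of _ _ _ "{..<-1}"])
    show "open {..<-1::real}" by simp
    show "z \<in> {..<-1}" using True by simp
    fix w :: real assume w: "w \<in> {..<-1}"
    have "integral {-2..w} omega0 = integral {-2..w} (\<lambda>y. 0)"
      using w by (intro integral_cong) (auto simp: omega0_vanish)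
    then show "0 = Lam w" by (simp add: Lam_eq)
  qed
next
  case False
  have "((\<lambda>x. integral {-2..x} omega0) has_real_derivative omega0 z) (at z within {-2..z+1})"
    using False by (intro integral_has_real_derivative omega0_cont) auto
  moreover have "at z within {-2..z+1} = at z"
    using False by (intro at_within_interior) auto
  ultimately show ?thesis by (simp add: Lam_eq[abs_def])
qed

definition DL :: "nat \<Rightarrow> real \<Rightarrow> real" where
  "DL m = (if m = 0 then Lam else Dw0 (m - 1))"

lemma dchain_DL: "dchain DL"
  unfolding dchain_def
proof (intro allI)
  fix m x
  show "(DL m has_real_derivative DL (Suc m) x) (at x)"
  proof (cases m)
    case 0 then show ?thesis using Lam_deriv by (simp add: DL_def Dw0_0)
  next
    case (Suc k) then show ?thesis using dchainD[OF dchain_Dw0] by (simp add: DL_def)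
  qed
qed

lemma DL_bound: "\<exists>C. \<forall>x. \<bar>DL m x\<bar> \<le> C"
proof (cases m)
  case 0
  then show ?thesis
    using bounded_if_deriv_vanish[OF Lam_deriv omega0_vanish] by (simp add: DL_def)
next
  case (Suc k) then show ?thesis using Dw0_global_bound by (simp add: DL_def)
qed

lemma DL_vanish_left: "x \<le> -1 \<Longrightarrow> DL m x = 0"
proof (cases m)
  case 0
  assume x: "x \<le> -1"
  have "integral {-2..x} omega0 = integral {-2..x} (\<lambda>y. 0)"
    using x by (intro integral_cong) (auto simp: omega0_vanish)
  then show ?thesis using 0 by (simp add: DL_def Lam_eq)
qed (simp add: DL_def Dw0_vanish)

lemma omega_low_eq: "omega_low \<epsilon> x = 1 / c0 * DL 0 (1/\<epsilon> * x + -1)"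
  by (simp add: omega_low_def DL_def Lam_def)

definition Dol :: "real \<Rightarrow> nat \<Rightarrow> real \<Rightarrow> real" where
  "Dol \<epsilon> m x = 1 / c0 * ((1/\<epsilon>)^m * DL m (1/\<epsilon> * x + -1))"

lemma dchain_Dol: "dchain (Dol \<epsilon>)"
  unfolding Dol_def[abs_def] by (intro dchain_scale dchain_affine dchain_DL)

lemma Dol_0: "Dol \<epsilon> 0 = omega_low \<epsilon>"
  by (simp add: fun_eq_iff Dol_def omega_low_eq)

lemma Dol_bound: "\<exists>C. \<forall>x. \<bar>Dol \<epsilon> m x\<bar> \<le> C"
proof -
  obtain C where C: "\<And>x. \<bar>DL m x\<bar> \<le> C" using DL_bound by blast
  have "\<bar>Dol \<epsilon> m x\<bar> \<le> \<bar>1/c0\<bar> * (\<bar>1/\<epsilon>\<bar>^m * C)" for x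
    unfolding Dol_def abs_mult power_abs
    by (intro mult_left_mono C) auto
  then show ?thesis by blast
qed

lemma Dol_vanish: "0 < \<epsilon> \<Longrightarrow> x \<le> 0 \<Longrightarrow> Dol \<epsilon> m x = 0"
  unfolding Dol_def by (subst DL_vanish_left) (auto simp: field_simps)



lemma card_nat_between:
  "real (card {j::nat. a < real j \<and> real j < b}) \<le> \<bar>b - a\<bar> + 1"
proof (cases "{j::nat. a < real j \<and> real j < b} = {}")
  case True
  then have "card {j::nat. a < real j \<and> real j < b} = 0" by (metis card.empty)
  then show ?thesis by simp
next
  case False
  define S where "S = {j::nat. a < real j \<and> real j < b}"
  have fin: "finite S"
  proof (rule finite_subset)
    show "S \<subseteq> {..nat \<lceil>b\<rceil>}" unfolding S_def by (auto simp: le_nat_iff) linarith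
  qed simp
  define j0 where "j0 = Min S"
  have j0S: "j0 \<in> S" using False fin unfolding j0_def S_def by (intro Min_in) auto
  have "S \<subseteq> {j0..<j0 + nat \<lceil>b - a\<rceil>}"
  proof
    fix j assume j: "j \<in> S"
    have "j0 \<le> j" using j fin unfolding j0_def by simp
    moreover have "real j < real j0 + (b - a)" using j j0S unfolding S_def by auto
    then have "real j < real j0 + real (nat \<lceil>b - a\<rceil>)" by linarith
    ultimately show "j \<in> {j0..<j0 + nat \<lceil>b - a\<rceil>}" by simp
  qed
  then have "card S \<le> nat \<lceil>b - a\<rceil>" by (metis card_atLeastLessThan card_mono diff_add_inverse finite_atLeastLessThan)
  then have "real (card S) \<le> real (nat \<lceil>b - a\<rceil>)" by simp
  also have "\<dots> \<le> \<bar>b - a\<bar> + 1" by linarith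
  finally show ?thesis unfolding S_def .
qed

lemma sum_window:
  fixes x0 Y :: real assumes x0: "x0 > 0" and Y: "Y > 0"
  shows "(\<Sum>j<J. if Y < x0 * real (Suc j) \<and> x0 * real (Suc j) < 2 * Y
             then 1 / (x0 * real (Suc j))^(m+1) else 0) \<le> 3 * 2^m / x0^(m+1)"
    (is "?L \<le> _")
proof (cases "Y \<le> x0 / 2")
  case True
  have "?L = 0"
  proof (intro sum.neutral ballI)
    fix j assume "j \<in> {..<J}"
    have "x0 * 1 \<le> x0 * real (Suc j)" using x0 by (intro mult_left_mono) auto
    then show "(if Y < x0 * real (Suc j) \<and> x0 * real (Suc j) < 2 * Y
             then 1 / (x0 * real (Suc j))^(m+1) else 0) = 0" using True by auto
  qed
  then show ?thesis using x0 by simp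
next
  case False
  then have Yb: "x0 < 2 * Y" by simp
  define S where "S = {j\<in>{..<J}. Y < x0 * real (Suc j) \<and> x0 * real (Suc j) < 2 * Y}"
  have "?L = (\<Sum>j\<in>S. 1 / (x0 * real (Suc j))^(m+1))"
    unfolding S_def by (rule sum.inter_filter[symmetric]) simp
  also have "\<dots> \<le> (\<Sum>j\<in>S. 1 / Y^(m+1))"
  proof (intro sum_mono)
    fix j assume "j \<in> S"
    then have "Y < x0 * real (Suc j)" by (simp add: S_def)
    then show "1 / (x0 * real (Suc j))^(m+1) \<le> 1 / Y^(m+1)"
      using Y by (intro divide_left_mono power_mono) auto
  qed
  also have "\<dots> = real (card S) / Y^(m+1)" by simp
  finally have L1: "?L \<le> real (card S) / Y^(m+1)" .
  have cS: "real (card S) \<le> Y / x0 + 1"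
  proof -
    have fin: "finite {j::nat. Y / x0 - 1 < real j \<and> real j < 2 * Y / x0 - 1}"
      by (rule finite_subset[of _ "{..nat \<lceil>2 * Y / x0\<rceil>}"]) (auto simp: le_nat_iff, linarith)
    have "S \<subseteq> {j::nat. Y / x0 - 1 < real j \<and> real j < 2 * Y / x0 - 1}"
      unfolding S_def using x0 by (auto simp: field_simps)
    then have "card S \<le> card {j::nat. Y / x0 - 1 < real j \<and> real j < 2 * Y / x0 - 1}"
      by (intro card_mono fin)
    then have "real (card S) \<le> real (card {j::nat. Y / x0 - 1 < real j \<and> real j < 2 * Y / x0 - 1})"
      by simp
    also have "\<dots> \<le> \<bar>(2 * Y / x0 - 1) - (Y / x0 - 1)\<bar> + 1" by (rule card_nat_between)
    also have "\<bar>(2 * Y / x0 - 1) - (Y / x0 - 1)\<bar> = Y / x0" using x0 Y by simp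
    finally show ?thesis .
  qed
  have "real (card S) / Y^(m+1) \<le> (Y / x0 + 1) / Y^(m+1)"
    using cS Y by (intro divide_right_mono) auto
  also have "\<dots> = 1 / (x0 * Y^m) + 1 / Y^(m+1)" using x0 Y by (simp add: field_simps)
  also have "\<dots> \<le> 2^m / x0^(m+1) + 2^(m+1) / x0^(m+1)"
  proof (intro add_mono)
    have iY: "1 / Y \<le> 2 / x0" using Yb x0 Y by (simp add: field_simps)
    have "(1 / Y)^m \<le> (2 / x0)^m" using iY Y by (intro power_mono) auto
    then show "1 / (x0 * Y^m) \<le> 2^m / x0^(m+1)"
      using x0 Y by (simp add: power_divide field_simps)
    have "(1 / Y)^(m+1) \<le> (2 / x0)^(m+1)" using iY Y by (intro power_mono) auto
    then show "1 / Y^(m+1) \<le> 2^(m+1) / x0^(m+1)"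
      by (simp add: power_divide)
  qed
  also have "\<dots> = 3 * 2^m / x0^(m+1)" by (simp add: field_simps)
  finally show ?thesis using L1 by linarith
qed

definition Dom :: "nat \<Rightarrow> real \<Rightarrow> real" where
  "Dom m z = 4 / c0 * (4^m * Dw0 m (4 * z + -3))"

lemma dchain_Dom: "dchain Dom"
  unfolding Dom_def[abs_def] by (intro dchain_scale dchain_affine dchain_Dw0)

lemma Dom_0: "Dom 0 = omega"
  by (simp add: fun_eq_iff Dom_def omega_def Dw0_0)

lemma Dom_vanish: "z \<le> 1/2 \<or> z \<ge> 1 \<Longrightarrow> Dom m z = 0"
  unfolding Dom_def by (subst Dw0_vanish) auto

lemma Dom_bound: "\<exists>K\<ge>0. \<forall>z. \<bar>Dom m z\<bar> \<le> K"
proof -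
  obtain C where C: "\<And>x. \<bar>Dw0 m x\<bar> \<le> C" using Dw0_global_bound by blast
  have "\<bar>Dom m z\<bar> \<le> \<bar>4/c0\<bar> * (4^m * C)" for z
  proof -
    have "\<bar>Dom m z\<bar> = \<bar>4/c0\<bar> * (4^m * \<bar>Dw0 m (4 * z + -3)\<bar>)" by (simp add: Dom_def abs_mult)
    also have "\<dots> \<le> \<bar>4/c0\<bar> * (4^m * C)" by (intro mult_left_mono C) auto
    finally show ?thesis .
  qed
  moreover have "0 \<le> \<bar>4/c0\<bar> * (4^m * C)" using C[of 0] by (intro mult_nonneg_nonneg) auto
  ultimately show ?thesis by blast
qed

definition hterm :: "real \<Rightarrow> nat \<Rightarrow> nat \<Rightarrow> real \<Rightarrow> real" where
  "hterm x0 j m y = (if m = 0 then omega (x0 * real (Suc j)) / (x0 * real (Suc j)) else 0)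
     + (-1 / (x0 * real (Suc j))) * ((1 / (x0 * real (Suc j)))^m * Dom m (1 / (x0 * real (Suc j)) * y + 0)
         + (-1 / (x0 * real (Suc j)))^m * Dom m ((-1 / (x0 * real (Suc j))) * y + 0))"

definition HJ :: "real \<Rightarrow> nat \<Rightarrow> nat \<Rightarrow> real \<Rightarrow> real" where
  "HJ x0 J m y = (\<Sum>j<J. hterm x0 j m y)"

lemma dchain_hterm: "dchain (hterm x0 j)"
  unfolding hterm_def[abs_def]
  by (intro dchain_add dchain_const dchain_scale dchain_affine dchain_Dom)

lemma dchain_HJ: "dchain (HJ x0 J)"
  unfolding HJ_def[abs_def] by (intro dchain_sum dchain_hterm)

definition win :: "real \<Rightarrow> real \<Rightarrow> nat \<Rightarrow> real" where
  "win Y a m = (if Y < a \<and> a < 2 * Y then 1 / a^(m+1) else 0)"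

lemma win_nonneg: "a > 0 \<Longrightarrow> win Y a m \<ge> 0"
  by (simp add: win_def)

lemma hterm_bound:
  assumes x0: "x0 > 0" and Kw: "\<And>z. \<bar>Dom 0 z\<bar> \<le> Kw" and Kd: "\<And>z. \<bar>Dom m z\<bar> \<le> Kd"
  shows "\<bar>hterm x0 j m y\<bar> \<le> (if m = 0 then Kw * win (1/2) (x0 * real (Suc j)) 0 else 0)
      + 2 * Kd * win \<bar>y\<bar> (x0 * real (Suc j)) m"
proof -
  define a where "a = x0 * real (Suc j)"
  have a0: "a > 0" using x0 by (simp add: a_def)
  have Kd0: "Kd \<ge> 0" using Kd[of 0] by simp
  have t1: "\<bar>(if m = 0 then omega a / a else 0)\<bar> \<le> (if m = 0 then Kw * win (1/2) a 0 else 0)"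
  proof (cases "m = 0")
    case True
    show ?thesis
    proof (cases "1/2 < a \<and> a < 2 * (1/2)")
      case True
      then show ?thesis using \<open>m = 0\<close> Kw[of a] a0
        by (simp add: win_def Dom_0 abs_divide divide_right_mono)
    next
      case False
      then have "omega a = 0" using Dom_vanish[of a 0] by (auto simp: Dom_0)
      then show ?thesis using \<open>m = 0\<close> False Kw[of 0] by (simp add: win_def)
    qed
  qed simp
  have t2: "\<bar>(-1 / a) * ((1 / a)^m * Dom m (1 / a * y + 0))\<bar> \<le> Kd * win \<bar>y\<bar> a m"
  proof (cases "\<bar>y\<bar> < a \<and> a < 2 * \<bar>y\<bar>")
    case True
    have "\<bar>(-1 / a) * ((1 / a)^m * Dom m (1 / a * y + 0))\<bar> = \<bar>Dom m (y/a)\<bar> / a^(m+1)"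
      using a0 by (simp add: abs_mult power_abs abs_divide power_one_over)
    also have "\<dots> \<le> Kd / a^(m+1)" using a0 Kd by (intro divide_right_mono) auto
    finally show ?thesis using True by (simp add: win_def)
  next
    case False
    have "Dom m (1 / a * y + 0) = 0"
    proof (rule Dom_vanish)
      show "1 / a * y + 0 \<le> 1/2 \<or> 1 / a * y + 0 \<ge> 1"
        using False a0 by (auto simp: field_simps abs_if split: if_splits)
    qed
    then show ?thesis using False by (auto simp: win_def)
  qed
  have t3: "\<bar>(-1 / a) * ((-1 / a)^m * Dom m ((-1 / a) * y + 0))\<bar> \<le> Kd * win \<bar>y\<bar> a m"
  proof (cases "\<bar>y\<bar> < a \<and> a < 2 * \<bar>y\<bar>")
    case True
    have "\<bar>(-1 / a) * ((-1 / a)^m * Dom m ((-1 / a) * y + 0))\<bar> = \<bar>Dom m (-y/a)\<bar> / a^(m+1)"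
      using a0 by (simp add: abs_mult power_abs abs_divide power_one_over)
    also have "\<dots> \<le> Kd / a^(m+1)" using a0 Kd by (intro divide_right_mono) auto
    finally show ?thesis using True by (simp add: win_def)
  next
    case False
    have "Dom m ((-1 / a) * y + 0) = 0"
    proof (rule Dom_vanish)
      show "(-1 / a) * y + 0 \<le> 1/2 \<or> (-1 / a) * y + 0 \<ge> 1"
        using False a0 by (auto simp: field_simps abs_if split: if_splits)
    qed
    then show ?thesis using False by (auto simp: win_def)
  qed
  have "\<bar>hterm x0 j m y\<bar> \<le> \<bar>(if m = 0 then omega a / a else 0)\<bar>
     + \<bar>(-1 / a) * ((1 / a)^m * Dom m (1 / a * y + 0))\<bar>
     + \<bar>(-1 / a) * ((-1 / a)^m * Dom m ((-1 / a) * y + 0))\<bar>"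
  proof -
    let ?A = "(if m = 0 then omega a / a else 0)"
    let ?B = "(-1 / a) * ((1 / a)^m * Dom m (1 / a * y + 0))"
    let ?C = "(-1 / a) * ((-1 / a)^m * Dom m ((-1 / a) * y + 0))"
    have "hterm x0 j m y = ?A + (?B + ?C)"
      unfolding hterm_def a_def[symmetric] by (simp only: distrib_left)
    then show ?thesis using abs_triangle_ineq[of ?A "?B + ?C"] abs_triangle_ineq[of ?B ?C] by linarith
  qed
  also have "\<dots> \<le> (if m = 0 then Kw * win (1/2) a 0 else 0) + Kd * win \<bar>y\<bar> a m + Kd * win \<bar>y\<bar> a m"
    using t1 t2 t3 by linarith
  finally show ?thesis unfolding a_def by simp
qed

lemma sum_win:
  assumes x0: "x0 > 0" and Y: "Y \<ge> 0"
  shows "(\<Sum>j<J. win Y (x0 * real (Suc j)) m) \<le> 3 * 2^m / x0^(m+1)"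
proof (cases "Y = 0")
  case True
  have "(\<Sum>j<J. win Y (x0 * real (Suc j)) m) = 0"
    using True x0 by (intro sum.neutral) (auto simp: win_def mult_less_0_iff)
  then show ?thesis using x0 by simp
next
  case False
  then show ?thesis unfolding win_def by (intro sum_window[OF x0]) (use Y in auto)
qed

lemma HJ_bound: "\<exists>K\<ge>0. \<forall>x0 J y. x0 > 0 \<longrightarrow> \<bar>HJ x0 J m y\<bar> \<le> K / x0^(m+1)"
proof -
  obtain Kw where Kw: "Kw \<ge> 0" "\<And>z. \<bar>Dom 0 z\<bar> \<le> Kw" using Dom_bound by blast
  obtain Kd where Kd: "Kd \<ge> 0" "\<And>z. \<bar>Dom m z\<bar> \<le> Kd" using Dom_bound by blast
  define K where "K = 3 * Kw + 2 * Kd * (3 * 2^m)"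
  have "\<bar>HJ x0 J m y\<bar> \<le> K / x0^(m+1)" if x0: "x0 > 0" for x0 J y
  proof -
    have "\<bar>HJ x0 J m y\<bar> \<le> (\<Sum>j<J. \<bar>hterm x0 j m y\<bar>)"
      unfolding HJ_def by (rule sum_abs)
    also have "\<dots> \<le> (\<Sum>j<J. (if m = 0 then Kw * win (1/2) (x0 * real (Suc j)) 0 else 0)
      + 2 * Kd * win \<bar>y\<bar> (x0 * real (Suc j)) m)"
      by (intro sum_mono hterm_bound x0 Kw Kd)
    also have "\<dots> = (if m = 0 then Kw * (\<Sum>j<J. win (1/2) (x0 * real (Suc j)) 0) else 0)
      + 2 * Kd * (\<Sum>j<J. win \<bar>y\<bar> (x0 * real (Suc j)) m)"
      by (simp add: sum.distrib sum_distrib_left)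
    also have "\<dots> \<le> (if m = 0 then Kw * (3 * 2^0 / x0^(0+1)) else 0) + 2 * Kd * (3 * 2^m / x0^(m+1))"
    proof (intro add_mono)
      show "(if m = 0 then Kw * (\<Sum>j<J. win (1/2) (x0 * real (Suc j)) 0) else 0)
         \<le> (if m = 0 then Kw * (3 * 2^0 / x0^(0+1)) else 0)"
        using mult_left_mono[OF sum_win[OF x0, where Y="1/2" and J=J and m=0] Kw(1)] by simp
      show "2 * Kd * (\<Sum>j<J. win \<bar>y\<bar> (x0 * real (Suc j)) m) \<le> 2 * Kd * (3 * 2^m / x0^(m+1))"
        using mult_left_mono[OF sum_win[OF x0, where Y="\<bar>y\<bar>" and J=J and m=m], of "2*Kd"] Kd by simp
    qed
    also have "\<dots> \<le> K / x0^(m+1)"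
      using x0 Kw Kd by (auto simp: K_def field_simps)
    finally show ?thesis .
  qed
  moreover have "K \<ge> 0" using Kw Kd by (simp add: K_def)
  ultimately show ?thesis by blast
qed

lemma omega_vanish: "z \<le> 1/2 \<or> z \<ge> 1 \<Longrightarrow> omega z = 0"
  using Dom_vanish[of z 0] by (simp add: Dom_0)

lemma h_fun_eq_HJ:
  assumes x0: "x0 > 0" and J: "\<And>j. j \<ge> J \<Longrightarrow> x0 * real (Suc j) \<ge> 1 \<and> 2 * \<bar>y\<bar> < x0 * real (Suc j)"
  shows "h_fun x0 y = HJ x0 J 0 y"
proof -
  define f where "f j = 1 / (x0 * real (Suc j)) *
      (omega (x0 * real (Suc j)) - omega (\<bar>y\<bar> / (x0 * real (Suc j))))" for j
  have z: "f j = 0" if "j \<notin> {..<J}" for j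
  proof -
    have a: "x0 * real (Suc j) \<ge> 1" "2 * \<bar>y\<bar> < x0 * real (Suc j)" using J[of j] that by auto
    have "omega (x0 * real (Suc j)) = 0" using a by (intro omega_vanish) auto
    moreover have "omega (\<bar>y\<bar> / (x0 * real (Suc j))) = 0"
      using a x0 by (intro omega_vanish) (auto simp: field_simps)
    ultimately show ?thesis by (simp add: f_def)
  qed
  have "h_fun x0 y = suminf f" unfolding h_fun_def f_def ..
  also have "\<dots> = sum f {..<J}" by (rule suminf_finite) (use z in auto)
  also have "\<dots> = HJ x0 J 0 y"
    unfolding HJ_def
  proof (intro sum.cong refl)
    fix j
    define a where "a = x0 * real (Suc j)"
    have a0: "a > 0" using x0 by (simp add: a_def)
    have "omega (\<bar>y\<bar> / a) = omega (y / a) + omega (-y / a)"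
    proof (cases "y \<ge> 0")
      case True
      then have "omega (-y/a) = 0" using a0 by (intro omega_vanish) (auto simp: field_simps)
      then show ?thesis using True by simp
    next
      case False
      then have "omega (y/a) = 0" using a0 by (intro omega_vanish) (auto simp: field_simps)
      then show ?thesis using False by simp
    qed
    then show "f j = hterm x0 j 0 y"
      unfolding f_def hterm_def a_def[symmetric] using a0 by (simp add: Dom_0 field_simps)
  qed
  finally show ?thesis .
qed



abbreviation "MM n \<equiv> PiM {0..n::nat} (\<lambda>_. lborel :: real measure)"

definition shift :: "nat \<Rightarrow> real \<Rightarrow> (nat \<Rightarrow> real) \<Rightarrow> (nat \<Rightarrow> real)" where
  "shift k d u = (\<lambda>i. if i = k then u k + d else u i)"

lemma shift_eq: "shift k d u = u(k := u k + d)"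
  by (auto simp: shift_def)

lemma shift_measurable: "k \<le> n \<Longrightarrow> shift k d \<in> measurable (MM n) (MM n)"
  unfolding shift_def
proof (rule measurable_PiM_single'[where f="\<lambda>i u. if i = k then u k + d else u i"])
  fix i assume "i \<in> {0..n}" "k \<le> n"
  show "(\<lambda>u. if i = k then u k + d else u i) \<in> measurable (MM n) lborel"
    using \<open>i \<in> {0..n}\<close> \<open>k \<le> n\<close> by (cases "i = k") auto
next
  assume "k \<le> n"
  then show "(\<lambda>u i. if i = k then u k + d else u i) \<in> space (MM n) \<rightarrow> (\<Pi>\<^sub>E i\<in>{0..n}. space lborel)"
    by (auto simp: space_PiM PiE_def extensional_def)
qed

lemma lborel_translate_emeasure:
  fixes A :: "real set" assumes "A \<in> sets borel"
  shows "emeasure lborel {x. x + d \<in> A} = emeasure lborel A"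
proof -
  have "emeasure lborel A = emeasure (distr lborel borel ((+) d)) A"
    by (simp add: lborel_distr_plus)
  also have "\<dots> = emeasure lborel (((+) d) -` A \<inter> space lborel)"
    using assms by (intro emeasure_distr) auto
  also have "((+) d) -` A \<inter> space lborel = {x. x + d \<in> A}" by (auto simp: add.commute)
  finally show ?thesis by simp
qed

lemma shift_distr: assumes k: "k \<le> n" shows "distr (MM n) (MM n) (shift k d) = MM n"
proof -
  interpret product_sigma_finite "\<lambda>_::nat. lborel :: real measure" by standard
  show ?thesis
  proof (rule PiM_eqI)
    show "finite {0..n}" by simp
    show "sets (distr (MM n) (MM n) (shift k d)) = sets (MM n)" by simp
    fix A assume A: "\<And>i. i \<in> {0..n} \<Longrightarrow> A i \<in> sets (lborel :: real measure)"
    define A' where "A' i = (if i = k then {x. x + d \<in> A k} else A i)" for i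
    have A'm: "A' i \<in> sets lborel" if "i \<in> {0..n}" for i
    proof -
      have "A k \<in> sets borel" using A k by auto
      then have "{x. x + d \<in> A k} \<in> sets borel" by measurable
      then show ?thesis using A[OF that] by (auto simp: A'_def)
    qed
    have "emeasure (distr (MM n) (MM n) (shift k d)) (Pi\<^sub>E {0..n} A)
        = emeasure (MM n) (shift k d -` Pi\<^sub>E {0..n} A \<inter> space (MM n))"
      using A by (intro emeasure_distr shift_measurable k sets_PiM_I_finite) auto
    also have "shift k d -` Pi\<^sub>E {0..n} A \<inter> space (MM n) = Pi\<^sub>E {0..n} A'"
      using k by (auto simp: shift_def A'_def space_PiM PiE_def extensional_def Pi_def split: if_splits)
    also have "emeasure (MM n) (Pi\<^sub>E {0..n} A') = (\<Prod>i\<in>{0..n}. emeasure lborel (A' i))"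
      by (intro emeasure_PiM A'm) auto
    also have "\<dots> = (\<Prod>i\<in>{0..n}. emeasure lborel (A i))"
    proof (intro prod.cong refl)
      fix i assume "i \<in> {0..n}"
      then show "emeasure lborel (A' i) = emeasure lborel (A i)"
        using A by (auto simp: A'_def intro!: lborel_translate_emeasure)
    qed
    finally show "emeasure (distr (MM n) (MM n) (shift k d)) (Pi\<^sub>E {0..n} A) = (\<Prod>i\<in>{0..n}. emeasure lborel (A i))" .
  qed
qed

lemma shift_integral:
  fixes f :: "(nat \<Rightarrow> real) \<Rightarrow> 'b::{banach, second_countable_topology}"
  assumes k: "k \<le> n" and f: "f \<in> borel_measurable (MM n)"
  shows "integral\<^sup>L (MM n) (\<lambda>u. f (shift k d u)) = integral\<^sup>L (MM n) f"
proof -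
  have "integral\<^sup>L (MM n) (\<lambda>u. f (shift k d u)) = integral\<^sup>L (distr (MM n) (MM n) (shift k d)) f"
    by (rule integral_distr[symmetric]) (use shift_measurable[OF k] f in auto)
  then show ?thesis by (simp add: shift_distr[OF k])
qed

lemma shift_integrable:
  fixes f :: "(nat \<Rightarrow> real) \<Rightarrow> 'b::{banach, second_countable_topology}"
  assumes k: "k \<le> n" and f: "integrable (MM n) f"
  shows "integrable (MM n) (\<lambda>u. f (shift k d u))"
proof -
  have "integrable (distr (MM n) (MM n) (shift k d)) f" using f by (simp add: shift_distr[OF k])
  then show ?thesis
    by (subst (asm) integrable_distr_eq) (use shift_measurable[OF k] f in auto)
qed



lemma fdiff_apply: "fdiff d g t = g t - g (t + d)"
  by (simp add: fdiff_def)

lemma fdiff_Suc: "(fdiff d ^^ Suc m) g t = (fdiff d ^^ m) g t - (fdiff d ^^ m) g (t + d)"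
  by (simp only: funpow.simps o_apply fdiff_def)

lemma fdiff_support:
  "(fdiff d ^^ m) g t \<noteq> 0 \<Longrightarrow> \<exists>i\<le>m. g (t + real i * d) \<noteq> 0"
proof (induction m arbitrary: t)
  case 0 then show ?case by auto
next
  case (Suc m)
  have "(fdiff d ^^ m) g t - (fdiff d ^^ m) g (t + d) \<noteq> 0"
    using Suc.prems unfolding fdiff_Suc .
  then have "(fdiff d ^^ m) g t \<noteq> 0 \<or> (fdiff d ^^ m) g (t + d) \<noteq> 0"
    by auto
  then show ?case
  proof
    assume "(fdiff d ^^ m) g t \<noteq> 0"
    then obtain i where "i \<le> m" "g (t + real i * d) \<noteq> 0" using Suc.IH by blast
    then show ?case by (intro exI[of _ i]) auto
  next
    assume "(fdiff d ^^ m) g (t + d) \<noteq> 0"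
    then obtain i where "i \<le> m" "g (t + d + real i * d) \<noteq> 0" using Suc.IH by blast
    then show ?case by (intro exI[of _ "Suc i"]) (auto simp: algebra_simps)
  qed
qed

lemma fdiff_crude:
  fixes g :: "real \<Rightarrow> real"
  assumes "\<And>t. \<bar>g t\<bar> \<le> MF"
  shows "\<bar>(fdiff d ^^ m) g t\<bar> \<le> 2^m * MF"
proof (induction m arbitrary: t)
  case 0 then show ?case using assms by simp
next
  case (Suc m)
  have "\<bar>(fdiff d ^^ Suc m) g t\<bar> \<le> \<bar>(fdiff d ^^ m) g t\<bar> + \<bar>(fdiff d ^^ m) g (t + d)\<bar>"
    unfolding fdiff_Suc by (rule abs_triangle_ineq4)
  also have "\<dots> \<le> 2^m * MF + 2^m * MF" by (intro add_mono Suc.IH)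
  finally show ?case by (simp add: algebra_simps)
qed

definition SB :: "nat \<Rightarrow> (nat \<Rightarrow> real) set" where
  "SB n = Pi\<^sub>E {0..n} (\<lambda>_. {-1..1})"

lemma SB_sets: "SB n \<in> sets (MM n)"
  unfolding SB_def by (intro sets_PiM_I_finite) auto

lemma SB_emeasure: "emeasure (MM n) (SB n) = ennreal (2^(n+1))"
proof -
  interpret product_sigma_finite "\<lambda>_::nat. lborel :: real measure" by standard
  have "emeasure (MM n) (SB n) = (\<Prod>i\<in>{0..n}. emeasure lborel {-1..1::real})"
    unfolding SB_def by (intro emeasure_PiM) auto
  also have "\<dots> = (\<Prod>i\<in>{0..n}. ennreal 2)" by simp
  also have "\<dots> = ennreal 2 ^ (n+1)"
    by (simp only: prod_constant card_atLeastAtMost diff_zero Suc_eq_plus1)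
  also have "\<dots> = ennreal (2^(n+1))" by (rule ennreal_power) simp
  finally show ?thesis .
qed

lemma SB_measure: "measure (MM n) (SB n) = 2^(n+1)"
  unfolding measure_def SB_emeasure by (simp del: power_Suc)

lemma SB_integrable: "integrable (MM n) (indicator (SB n) :: _ \<Rightarrow> real)"
  by (intro integrable_real_indicator SB_sets) (simp only: SB_emeasure infinity_ennreal_def ennreal_less_top)

lemma shift_add: "shift k a (shift k b u) = shift k (b + a) u"
  by (auto simp: shift_def fun_eq_iff)

lemma decay:
  fixes E :: "(nat \<Rightarrow> real) \<Rightarrow> complex" and F :: "(nat \<Rightarrow> real) \<Rightarrow> real"
  assumes k: "k \<le> n"
    and Em: "E \<in> borel_measurable (MM n)" and Eshift: "\<And>u. E (shift k d u) = - E u"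
    and Enorm: "\<And>u. norm (E u) \<le> 1"
    and Fm: "F \<in> borel_measurable (MM n)" and Fb: "\<And>u. \<bar>F u\<bar> \<le> MF"
    and Fsupp: "\<And>u. u \<in> space (MM n) \<Longrightarrow> F u \<noteq> 0 \<Longrightarrow> u \<in> SB n"
    and Fchain: "\<And>u. \<exists>D. dchain D \<and> D 0 = (\<lambda>t. F (u(k := t))) \<and> (\<forall>t. \<bar>D N t\<bar> \<le> M)"
  shows "norm (integral\<^sup>L (MM n) (\<lambda>u. complex_of_real (F u) * E u))
           \<le> (1/2)^N * (\<bar>d\<bar>^N * M) * (real N + 1) * 2^(n+1)"
proof -
  define G where "G m u = (fdiff d ^^ m) (\<lambda>t. F (u(k := t))) (u k)" for m u
  have G0: "G 0 u = F u" for u by (simp add: G_def)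
  have GS: "G (Suc m) u = G m u - G m (shift k d u)" for m u
    by (simp add: G_def fdiff_apply shift_eq)
  have Gm: "G m \<in> borel_measurable (MM n)" for m
  proof (induction m)
    case 0 then show ?case using Fm by (simp add: G0[abs_def])
  next
    case (Suc m)
    have "(\<lambda>u. G m (shift k d u)) \<in> borel_measurable (MM n)"
      using measurable_compose[OF shift_measurable[OF k] Suc.IH] .
    then show ?case using Suc.IH by (simp add: GS[abs_def])
  qed
  have shift_space: "shift k a u \<in> space (MM n)" if "u \<in> space (MM n)" for a u
    using that k by (auto simp: shift_def space_PiM PiE_def extensional_def)
  define Bnd where "Bnd m u = (\<Sum>i\<le>m. indicator (SB n) (shift k (real i * d) u) :: real)" for m u
  have Bnd_int: "integrable (MM n) (Bnd m)" for m
  proof -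
    have "integrable (MM n) (\<lambda>u. \<Sum>i\<le>m. indicator (SB n) (shift k (real i * d) u) :: real)"
      by (rule Bochner_Integration.integrable_sum) (rule shift_integrable[OF k SB_integrable])
    then show ?thesis unfolding Bnd_def[abs_def] .
  qed
  have Bnd_nonneg: "Bnd m u \<ge> 0" for m u by (simp add: Bnd_def sum_nonneg)
  have Gsupp: "G m u = 0 \<or> Bnd m u \<ge> 1" if u: "u \<in> space (MM n)" for m u
  proof (cases "G m u = 0")
    case False
    then obtain i where i: "i \<le> m" "F (u(k := u k + real i * d)) \<noteq> 0"
      using fdiff_support[where d=d and m=m] unfolding G_def by blast
    have "u(k := u k + real i * d) = shift k (real i * d) u" by (simp add: shift_eq)
    then have "shift k (real i * d) u \<in> SB n" using i Fsupp shift_space[OF u] by metis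
    then have "1 \<le> Bnd m u" unfolding Bnd_def
      using member_le_sum[of i "{..m}" "\<lambda>i. indicator (SB n) (shift k (real i * d) u) :: real"] i
      by (auto simp: indicator_def)
    then show ?thesis by simp
  qed simp
  have MF0: "MF \<ge> 0" using Fb[of undefined] by simp
  have Gcrude: "\<bar>G m u\<bar> \<le> 2^m * MF * Bnd m u" if u: "u \<in> space (MM n)" for m u
  proof -
    have "\<bar>G m u\<bar> \<le> 2^m * MF" unfolding G_def by (rule fdiff_crude) (use Fb in auto)
    then show ?thesis using Gsupp[OF u, of m] MF0 Bnd_nonneg[of m u]
      by (auto intro: order_trans[OF _ mult_left_mono[of 1 "Bnd m u"]])
  qed
  have GE_int: "integrable (MM n) (\<lambda>u. complex_of_real (G m u) * E u)" for m
  proof (rule Bochner_Integration.integrable_bound[where f="\<lambda>u. 2^m * MF * Bnd m u"])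
    show "integrable (MM n) (\<lambda>u. 2^m * MF * Bnd m u)" using Bnd_int by auto
    show "(\<lambda>u. complex_of_real (G m u) * E u) \<in> borel_measurable (MM n)"
      using Gm Em by measurable
    show "AE u in MM n. norm (complex_of_real (G m u) * E u) \<le> norm (2^m * MF * Bnd m u)"
    proof (intro AE_I2)
      fix u assume u: "u \<in> space (MM n)"
      have "norm (complex_of_real (G m u) * E u) \<le> \<bar>G m u\<bar> * 1"
        unfolding norm_mult norm_of_real by (intro mult_left_mono Enorm) auto
      also have "\<dots> \<le> 2^m * MF * Bnd m u" using Gcrude[OF u] by simp
      also have "\<dots> \<le> norm (2^m * MF * Bnd m u)" by simp
      finally show "norm (complex_of_real (G m u) * E u) \<le> norm (2^m * MF * Bnd m u)" .
    qed
  qed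
  have step: "integral\<^sup>L (MM n) (\<lambda>u. complex_of_real (G m u) * E u)
      = 1/2 * integral\<^sup>L (MM n) (\<lambda>u. complex_of_real (G (Suc m) u) * E u)" for m
  proof -
    let ?f = "\<lambda>u. complex_of_real (G m u) * E u"
    have fm: "?f \<in> borel_measurable (MM n)" using Gm Em by measurable
    have i1: "integral\<^sup>L (MM n) ?f = integral\<^sup>L (MM n) (\<lambda>u. ?f (shift k d u))"
      by (rule shift_integral[OF k fm, symmetric])
    also have "\<dots> = integral\<^sup>L (MM n) (\<lambda>u. - (complex_of_real (G m (shift k d u)) * E u))"
      by (simp add: Eshift)
    finally have i2: "integral\<^sup>L (MM n) ?f = - integral\<^sup>L (MM n) (\<lambda>u. complex_of_real (G m (shift k d u)) * E u)"
      by simp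
    have int2: "integrable (MM n) (\<lambda>u. complex_of_real (G m (shift k d u)) * E u)"
    proof -
      have "integrable (MM n) (\<lambda>u. ?f (shift k d u))" by (rule shift_integrable[OF k GE_int])
      then have "integrable (MM n) (\<lambda>u. - (?f (shift k d u)))" by (rule integrable_minus)
      then show ?thesis by (simp add: Eshift)
    qed
    have "integral\<^sup>L (MM n) (\<lambda>u. complex_of_real (G (Suc m) u) * E u)
        = integral\<^sup>L (MM n) (\<lambda>u. ?f u - complex_of_real (G m (shift k d u)) * E u)"
      by (simp add: GS algebra_simps)
    also have "\<dots> = integral\<^sup>L (MM n) ?f - integral\<^sup>L (MM n) (\<lambda>u. complex_of_real (G m (shift k d u)) * E u)"
      by (rule Bochner_Integration.integral_diff[OF GE_int int2])
    also have "\<dots> = 2 * integral\<^sup>L (MM n) ?f" using i2 by simp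
    finally show ?thesis by simp
  qed
  have iter: "integral\<^sup>L (MM n) (\<lambda>u. complex_of_real (F u) * E u)
      = (1/2)^m * integral\<^sup>L (MM n) (\<lambda>u. complex_of_real (G m u) * E u)" for m
  proof (induction m)
    case 0 then show ?case by (simp add: G0)
  next
    case (Suc m) then show ?case using step[of m] by simp
  qed
  have GN: "\<bar>G N u\<bar> \<le> (\<bar>d\<bar>^N * M) * Bnd N u" if u: "u \<in> space (MM n)" for u
  proof -
    obtain D where D: "dchain D" "D 0 = (\<lambda>t. F (u(k := t)))" "\<And>t. \<bar>D N t\<bar> \<le> M"
      using Fchain[of u] by blast
    have "\<bar>G N u\<bar> \<le> \<bar>d\<bar>^N * M" unfolding G_def D(2)[symmetric] by (rule fdiff_bound[OF D(1) D(3)])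
    moreover have "0 \<le> \<bar>d\<bar>^N * M" using D(3)[of 0] by simp
    ultimately show ?thesis using Gsupp[OF u, of N] Bnd_nonneg[of N u]
      by (auto intro: order_trans[OF _ mult_left_mono[of 1 "Bnd N u"]])
  qed
  have "norm (integral\<^sup>L (MM n) (\<lambda>u. complex_of_real (G N u) * E u))
      \<le> integral\<^sup>L (MM n) (\<lambda>u. norm (complex_of_real (G N u) * E u))"
    by (rule integral_norm_bound)
  also have "\<dots> \<le> integral\<^sup>L (MM n) (\<lambda>u. (\<bar>d\<bar>^N * M) * Bnd N u)"
  proof (rule integral_mono')
    show "integrable (MM n) (\<lambda>u. (\<bar>d\<bar>^N * M) * Bnd N u)" using Bnd_int by auto
    fix u assume u: "u \<in> space (MM n)"
    have "norm (complex_of_real (G N u) * E u) \<le> \<bar>G N u\<bar> * 1"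
      unfolding norm_mult norm_of_real by (intro mult_left_mono Enorm) auto
    then show "norm (complex_of_real (G N u) * E u) \<le> (\<bar>d\<bar>^N * M) * Bnd N u" using GN[OF u] by simp
    show "0 \<le> (\<bar>d\<bar>^N * M) * Bnd N u"
      using GN[OF u] Bnd_nonneg[of N u] by (smt (verit) abs_ge_zero)
  qed
  also have "\<dots> = (\<bar>d\<bar>^N * M) * integral\<^sup>L (MM n) (Bnd N)" by simp
  also have "integral\<^sup>L (MM n) (Bnd N) = (real N + 1) * 2^(n+1)"
  proof -
    have "integral\<^sup>L (MM n) (Bnd N) = (\<Sum>i\<le>N. integral\<^sup>L (MM n) (\<lambda>u. indicator (SB n) (shift k (real i * d) u) :: real))"
      unfolding Bnd_def[abs_def]
      by (rule Bochner_Integration.integral_sum) (intro shift_integrable[OF k] SB_integrable)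
    also have "\<dots> = (\<Sum>i\<le>N. integral\<^sup>L (MM n) (indicator (SB n) :: _ \<Rightarrow> real))"
      by (intro sum.cong refl shift_integral[OF k] borel_measurable_indicator SB_sets)
    also have "\<dots> = (real N + 1) * 2^(n+1)"
      using SB_sets[of n] by (simp add: SB_measure Int_absorb2 sets.sets_into_space)
    finally show ?thesis .
  qed
  finally have "norm (integral\<^sup>L (MM n) (\<lambda>u. complex_of_real (G N u) * E u)) \<le> (\<bar>d\<bar>^N * M) * ((real N + 1) * 2^(n+1))" .
  moreover have "norm ((1/2)^N :: complex) = (1/2)^N" by (simp add: norm_power norm_divide)
  ultimately show ?thesis unfolding iter[of N] norm_mult
    by (metis (no_types, lifting) mult.assoc mult_left_mono zero_le_divide_1_iff zero_le_numeral zero_le_power)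
qed



definition Kol :: "real \<Rightarrow> nat \<Rightarrow> real" where
  "Kol \<epsilon> m = (SOME C. \<forall>x. \<bar>Dol \<epsilon> m x\<bar> \<le> C)"

lemma Kol: "\<bar>Dol \<epsilon> m x\<bar> \<le> Kol \<epsilon> m"
  using someI_ex[OF Dol_bound[of \<epsilon> m]] unfolding Kol_def by blast

lemma Kol_nonneg: "Kol \<epsilon> m \<ge> 0"
  using Kol[of \<epsilon> m 0] by simp

definition gA :: "real \<Rightarrow> nat \<Rightarrow> real \<Rightarrow> real" where
  "gA \<epsilon> m s = (-1)^m * Dol \<epsilon> m ((-1) * s + 1)"
definition gB :: "real \<Rightarrow> real \<Rightarrow> nat \<Rightarrow> real \<Rightarrow> real" where
  "gB \<epsilon> P m s = 1^m * Dol \<epsilon> m (1 * s + (-1/P))"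
definition Gp :: "real \<Rightarrow> real \<Rightarrow> nat \<Rightarrow> real \<Rightarrow> real" where
  "Gp \<epsilon> P m s = (\<Sum>i=0..m. real (m choose i) * gA \<epsilon> i s * gB \<epsilon> P (m-i) s)"
definition Psi :: "real \<Rightarrow> real \<Rightarrow> nat \<Rightarrow> real \<Rightarrow> real" where
  "Psi \<epsilon> P m t = Gp \<epsilon> P m t + (-1)^m * Gp \<epsilon> P m ((-1) * t + 0)"

lemma dchain_Gp: "dchain (Gp \<epsilon> P)"
  unfolding Gp_def[abs_def] gA_def[abs_def] gB_def[abs_def]
  by (intro dchain_mult dchain_affine dchain_Dol)

lemma dchain_Psi: "dchain (Psi \<epsilon> P)"
  unfolding Psi_def[abs_def]
  by (intro dchain_add dchain_affine dchain_Gp)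

definition KPsi :: "real \<Rightarrow> nat \<Rightarrow> real" where
  "KPsi \<epsilon> m = 2 * (\<Sum>i=0..m. real (m choose i) * Kol \<epsilon> i * Kol \<epsilon> (m-i))"

lemma Gp_bound: "\<bar>Gp \<epsilon> P m s\<bar> \<le> (\<Sum>i=0..m. real (m choose i) * Kol \<epsilon> i * Kol \<epsilon> (m-i))"
proof -
  have "\<bar>Gp \<epsilon> P m s\<bar> \<le> (\<Sum>i=0..m. \<bar>real (m choose i) * gA \<epsilon> i s * gB \<epsilon> P (m-i) s\<bar>)"
    unfolding Gp_def by (rule sum_abs)
  also have "\<dots> \<le> (\<Sum>i=0..m. real (m choose i) * Kol \<epsilon> i * Kol \<epsilon> (m-i))"
  proof (intro sum_mono)
    fix i
    have "\<bar>gA \<epsilon> i s\<bar> \<le> Kol \<epsilon> i" by (simp add: gA_def abs_mult Kol)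
    moreover have "\<bar>gB \<epsilon> P (m-i) s\<bar> \<le> Kol \<epsilon> (m-i)" by (simp add: gB_def Kol)
    ultimately show "\<bar>real (m choose i) * gA \<epsilon> i s * gB \<epsilon> P (m-i) s\<bar> \<le> real (m choose i) * Kol \<epsilon> i * Kol \<epsilon> (m-i)"
      unfolding abs_mult by (intro mult_mono) (auto simp: Kol_nonneg)
  qed
  finally show ?thesis .
qed

lemma Psi_bound: "\<bar>Psi \<epsilon> P m t\<bar> \<le> KPsi \<epsilon> m"
proof -
  have "\<bar>Psi \<epsilon> P m t\<bar> \<le> \<bar>Gp \<epsilon> P m t\<bar> + \<bar>Gp \<epsilon> P m ((-1) * t + 0)\<bar>"
    unfolding Psi_def by (simp add: abs_mult power_abs abs_triangle_ineq[THEN order_trans])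
  then show ?thesis using Gp_bound[of \<epsilon> P m t] Gp_bound[of \<epsilon> P m "(-1) * t + 0"]
    by (simp add: KPsi_def)
qed

lemma KPsi_nonneg: "KPsi \<epsilon> m \<ge> 0"
  using Psi_bound[of \<epsilon> 1 m 0] by simp

lemma Psi_0:
  assumes e: "\<epsilon> > 0" and P: "P > 0"
  shows "Psi \<epsilon> P 0 t = omega_low \<epsilon> (1 - \<bar>t\<bar>) * omega_low \<epsilon> (\<bar>t\<bar> - 1 / P)"
proof -
  have G0: "Gp \<epsilon> P 0 s = omega_low \<epsilon> (1 - s) * omega_low \<epsilon> (s - 1/P)" for s
    by (simp add: Gp_def gA_def gB_def Dol_0)
  have z: "omega_low \<epsilon> z = 0" if "z \<le> 0" for z
    using Dol_vanish[OF e that, of 0] by (simp add: Dol_0)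
  show ?thesis
  proof (cases "t \<ge> 0")
    case True
    have "0 < 1/P" using P by simp
    then have "omega_low \<epsilon> (-t - 1/P) = 0" using True by (intro z) linarith
    then show ?thesis using True by (simp add: Psi_def G0)
  next
    case False
    have "omega_low \<epsilon> (t - 1/P) = 0" using False P by (intro z) (smt (verit) divide_pos_pos)
    then show ?thesis using False by (simp add: Psi_def G0)
  qed
qed

lemma Psi_0_vanish:
  assumes e: "\<epsilon> > 0" and P: "P > 0" and t: "\<bar>t\<bar> \<ge> 1"
  shows "Psi \<epsilon> P 0 t = 0"
proof -
  have "omega_low \<epsilon> (1 - \<bar>t\<bar>) = 0"
    using Dol_vanish[OF e, of "1 - \<bar>t\<bar>" 0] t by (simp add: Dol_0)
  then show ?thesis by (simp add: Psi_0[OF e P])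
qed

lemma w_low_eq:
  assumes e: "\<epsilon> > 0" and P: "P > 0"
  shows "w_low n \<epsilon> P u = (\<Prod>j\<in>{0..n}. Psi \<epsilon> P 0 (u j))"
  unfolding w_low_def by (simp add: Psi_0[OF e P])

lemma dchain_measurable: "dchain D \<Longrightarrow> D m \<in> borel_measurable borel"
  by (intro borel_measurable_continuous_onI dchain_cont)

definition KH :: "nat \<Rightarrow> real" where
  "KH m = (SOME K. K \<ge> 0 \<and> (\<forall>x0 J y. x0 > 0 \<longrightarrow> \<bar>HJ x0 J m y\<bar> \<le> K / x0^(m+1)))"

lemma KH: "KH m \<ge> 0" "x0 > 0 \<Longrightarrow> \<bar>HJ x0 J m y\<bar> \<le> KH m / x0^(m+1)"
  using someI_ex[OF HJ_bound[of m]] unfolding KH_def by blast+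



lemma prod_Psi_bound:
  assumes "finite S"
  shows "\<bar>\<Prod>j\<in>S. Psi \<epsilon> P 0 (f j)\<bar> \<le> KPsi \<epsilon> 0 ^ card S"
proof -
  have "\<bar>\<Prod>j\<in>S. Psi \<epsilon> P 0 (f j)\<bar> = (\<Prod>j\<in>S. \<bar>Psi \<epsilon> P 0 (f j)\<bar>)" by (simp add: abs_prod)
  also have "\<dots> \<le> (\<Prod>j\<in>S. KPsi \<epsilon> 0)" by (intro prod_mono) (auto simp: Psi_bound)
  also have "\<dots> = KPsi \<epsilon> 0 ^ card S" by simp
  finally show ?thesis .
qed

lemma e_char_add: "e_char (a + b) = e_char a * e_char b"
  by (simp add: e_char_def distrib_left exp_add)

lemma e_char_half: "e_char (-1/2) = -1"
proof -
  have "e_char (-1/2) = exp (- (pi * \<i>))" by (simp add: e_char_def)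
  also have "\<dots> = -1" by (simp add: exp_minus exp_pi_i')
  finally show ?thesis .
qed

lemma norm_e_char: "norm (e_char a) = 1"
  by (simp add: e_char_def norm_exp_eq_Re)

lemma cont_e_char: "continuous_on UNIV e_char"
  unfolding e_char_def by (intro continuous_intros)

lemma slice_prod:
  assumes "k \<in> S" "finite S"
  shows "(\<Prod>j\<in>S. g ((u(k := t)) j)) = g t * (\<Prod>j\<in>S - {k}. g (u j))"
proof -
  have "(\<Prod>j\<in>S. g ((u(k := t)) j)) = g t * (\<Prod>j\<in>S - {k}. g ((u(k := t)) j))"
    using assms by (simp add: prod.remove)
  also have "(\<Prod>j\<in>S - {k}. g ((u(k := t)) j)) = (\<Prod>j\<in>S - {k}. g (u j))"
    by (intro prod.cong) auto
  finally show ?thesis .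
qed

lemma slice_sum:
  assumes "k \<in> S" "finite S"
  shows "(\<Sum>j\<in>S. r j * (u(k := t)) j) = r k * t + (\<Sum>j\<in>S - {k}. r j * u j)"
proof -
  have "(\<Sum>j\<in>S. r j * (u(k := t)) j) = r k * t + (\<Sum>j\<in>S - {k}. r j * (u(k := t)) j)"
    using assms by (simp add: sum.remove)
  also have "(\<Sum>j\<in>S - {k}. r j * (u(k := t)) j) = (\<Sum>j\<in>S - {k}. r j * u j)"
    by (intro sum.cong) auto
  finally show ?thesis .
qed



definition K1 :: "nat \<Rightarrow> nat \<Rightarrow> real \<Rightarrow> real" where
  "K1 n N \<epsilon> = KPsi \<epsilon> 0 ^ n * (\<Sum>i=0..N. real (N choose i) * KPsi \<epsilon> i * KH (N-i) * (2 * (real n + 1))^i)"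

lemma K1_nonneg: "K1 n N \<epsilon> \<ge> 0"
  unfolding K1_def by (intro mult_nonneg_nonneg sum_nonneg zero_le_power KPsi_nonneg KH(1)) auto

definition Cst :: "nat \<Rightarrow> nat \<Rightarrow> real \<Rightarrow> real" where
  "Cst n N \<epsilon> = (1/4)^N * K1 n N \<epsilon> * (real N + 1) * 2^(n+1)"

lemma main_bound:
  fixes n N :: nat and \<epsilon> B :: real and x y c :: "nat \<Rightarrow> int" and i0 j0 q :: nat
  assumes e: "0 < \<epsilon>" and i0: "i0 \<le> n" and j0: "j0 \<le> n" and B: "B \<ge> 1"
    and xi0: "x i0 \<ge> 1" and yj0: "y j0 \<ge> 1"
    and xb: "\<forall>i\<le>n. \<bar>x i\<bar> \<le> x i0" and yb: "\<forall>j\<le>n. \<bar>y j\<bar> \<le> y j0"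
    and q: "q \<ge> 1" and c: "\<exists>k\<le>n. c k \<noteq> 0"
  shows "norm (I_int n \<epsilon> B x y i0 j0 q c)
      \<le> Cst n N \<epsilon> * (sqrt B / real q) *
         (real_of_int (x i0 * y j0) / (sqrt B * supnorm n c)) ^ N"
proof -
  define X where "X = real_of_int (x i0)"
  define Yv where "Yv = real_of_int (y j0)"
  define Q where "Q = sqrt B"
  define P where "P = B / (X * Yv)"
  define x0 where "x0 = real q / Q"
  have X1: "X \<ge> 1" and Y1: "Yv \<ge> 1" using xi0 yj0 by (auto simp: X_def Yv_def)
  have Q1: "Q \<ge> 1" using B by (simp add: Q_def)
  have QQ: "Q * Q = B" using B by (simp add: Q_def)
  have P0: "P > 0" using B X1 Y1 by (simp add: P_def)
  have q0: "real q > 0" using q by simp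
  have x00: "x0 > 0" using q0 Q1 by (simp add: x0_def)
  have xyb: "\<bar>real_of_int (x j * y j)\<bar> \<le> X * Yv" if "j \<le> n" for j
  proof -
    have "\<bar>x j * y j\<bar> \<le> x i0 * y j0"
      unfolding abs_mult using xb yb that by (intro mult_mono) auto
    then show ?thesis unfolding X_def Yv_def by (metis of_int_abs of_int_le_iff of_int_mult)
  qed
  define s where "s = supnorm n c"
  have fin_img: "finite ((\<lambda>k. real_of_int \<bar>c k\<bar>) ` {0..n})" by simp
  have "s \<in> (\<lambda>k. real_of_int \<bar>c k\<bar>) ` {0..n}"
    unfolding s_def supnorm_def by (rule Max_in[OF fin_img]) simp
  then obtain k where k: "k \<le> n" "real_of_int \<bar>c k\<bar> = s" by auto
  have s_ge: "real_of_int \<bar>c j\<bar> \<le> s" if "j \<le> n" for j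
    unfolding s_def supnorm_def using that by (intro Max_ge fin_img) auto
  have ck: "c k \<noteq> 0"
  proof
    assume "c k = 0"
    then have "s = 0" using k by simp
    then show False using c s_ge by fastforce
  qed
  have s1: "s \<ge> 1" using ck k(2) by (metis of_int_1_le_iff zero_less_abs_iff int_one_le_iff_zero_less)
  define Lf where "Lf u = (\<Sum>j\<in>{0..n}. real_of_int (x j * y j) * u j) / (X * Yv)" for u
  define E where "E u = e_q (real q) (- P * (\<Sum>j\<in>{0..n}. real_of_int (c j) * u j))" for u
  define J where "J = (if x0 > 2 * (real n + 1) then 0 else nat \<lceil>(2 * real n + 3) / x0\<rceil>)"
  define F where "F u = w_low n \<epsilon> P u * HJ x0 J 0 (Lf u)" for u
  have wsupp: "\<bar>u j\<bar> < 1" if "w_low n \<epsilon> P u \<noteq> 0" "j \<le> n" for u j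
  proof (rule ccontr)
    assume "\<not> \<bar>u j\<bar> < 1"
    then have "Psi \<epsilon> P 0 (u j) = 0" by (intro Psi_0_vanish[OF e P0]) auto
    then have "(\<Prod>j\<in>{0..n}. Psi \<epsilon> P 0 (u j)) = 0" using that(2) by (intro prod_zero) auto
    then show False using that(1) by (simp add: w_low_eq[OF e P0])
  qed
  have Lsmall: "\<bar>Lf u\<bar> < real n + 1" if w: "w_low n \<epsilon> P u \<noteq> 0" for u
  proof -
    have "\<bar>\<Sum>j\<in>{0..n}. real_of_int (x j * y j) * u j\<bar> \<le> (\<Sum>j\<in>{0..n}. \<bar>real_of_int (x j * y j) * u j\<bar>)"
      by (rule sum_abs)
    also have "\<dots> < (\<Sum>j\<in>{0..n}. X * Yv * 1)"
    proof (rule sum_strict_mono)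
      fix j assume j: "j \<in> {0..n}"
      have "\<bar>real_of_int (x j * y j)\<bar> * \<bar>u j\<bar> \<le> X * Yv * \<bar>u j\<bar>"
        using xyb[of j] j by (intro mult_right_mono) auto
      also have "\<dots> < X * Yv * 1" using wsupp[OF w, of j] j X1 Y1 by (intro mult_strict_left_mono) auto
      finally show "\<bar>real_of_int (x j * y j) * u j\<bar> < X * Yv * 1" by (simp add: abs_mult)
    qed auto
    also have "\<dots> = X * Yv * (real n + 1)" by simp
    finally show ?thesis using X1 Y1 by (simp add: Lf_def abs_divide divide_less_eq mult.commute)
  qed
  have key: "w_low n \<epsilon> P u * h_fun x0 (Lf u) = F u" for u
  proof (cases "w_low n \<epsilon> P u = 0")
    case False
    have "h_fun x0 (Lf u) = HJ x0 J 0 (Lf u)"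
    proof (rule h_fun_eq_HJ[OF x00])
      fix j assume j: "J \<le> j"
      have L: "\<bar>Lf u\<bar> < real n + 1" by (rule Lsmall[OF False])
      show "1 \<le> x0 * real (Suc j) \<and> 2 * \<bar>Lf u\<bar> < x0 * real (Suc j)"
      proof (cases "x0 > 2 * (real n + 1)")
        case True
        have h: "x0 \<le> x0 * real (Suc j)" using x00 mult_left_mono[of 1 "real (Suc j)" x0] by simp
        have n0: "real n \<ge> 0" by simp
        have gen: "\<And>a. x0 \<le> a \<Longrightarrow> 1 \<le> a \<and> 2 * \<bar>Lf u\<bar> < a" using True L n0 by auto
        show ?thesis using gen[OF h] .
      next
        case False
        then have JJ: "J = nat \<lceil>(2 * real n + 3) / x0\<rceil>" by (simp add: J_def)
        have "(2 * real n + 3) / x0 \<le> real J" unfolding JJ by linarith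
        then have "2 * real n + 3 \<le> x0 * real J" using x00 by (simp add: field_simps)
        also have "x0 * real J < x0 * real (Suc j)" using x00 j by (intro mult_strict_left_mono) auto
        finally show ?thesis using L by auto
      qed
    qed
    then show ?thesis by (simp add: F_def)
  qed (simp add: F_def)
  have Ieq: "I_int n \<epsilon> B x y i0 j0 q c = integral\<^sup>L (MM n) (\<lambda>u. complex_of_real (F u) * E u)"
  proof -
    have "I_int n \<epsilon> B x y i0 j0 q c = integral\<^sup>L (MM n) (\<lambda>u. complex_of_real (w_low n \<epsilon> P u * h_fun x0 (Lf u)) * E u)"
      unfolding I_int_def Let_def P_def x0_def Q_def Lf_def E_def X_def Yv_def ..
    then show ?thesis by (simp only: key)
  qed
  have RHS0: "0 \<le> Cst n N \<epsilon> * (sqrt B / real q) * (real_of_int (x i0 * y j0) / (sqrt B * supnorm n c)) ^ N"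
    using K1_nonneg[of n N \<epsilon>] s1 xi0 yj0 B unfolding s_def[symmetric] Cst_def
    by (intro mult_nonneg_nonneg zero_le_power divide_nonneg_nonneg) auto
  show ?thesis
  proof (cases "x0 > 2 * (real n + 1)")
    case True
    then have "J = 0" by (simp add: J_def)
    then have "F u = 0" for u by (simp add: F_def HJ_def)
    then have "I_int n \<epsilon> B x y i0 j0 q c = 0" by (simp add: Ieq)
    then show ?thesis using RHS0 by simp
  next
    case False
    then have x0b: "x0 \<le> 2 * (real n + 1)" by simp
    define d where "d = real q / (2 * P * real_of_int (c k))"
    define M where "M = K1 n N \<epsilon> / x0^(N+1)"
    define MF where "MF = KPsi \<epsilon> 0 ^ (n+1) * (KH 0 / x0)"
    have kn: "k \<in> {0..n}" using k by simp
    have sum_split: "(\<Sum>j\<in>{0..n}. r j * (u(k := t)) j) = r k * t + (\<Sum>j\<in>{0..n} - {k}. r j * u j)"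
      for r :: "nat \<Rightarrow> real" and u t by (rule slice_sum[OF kn]) simp
    have Eshift: "E (shift k d u) = - E u" for u
    proof -
      let ?S = "\<Sum>j\<in>{0..n}. real_of_int (c j) * u j"
      have "(\<Sum>j\<in>{0..n}. real_of_int (c j) * shift k d u j)
          = (\<Sum>j\<in>{0..n}. real_of_int (c j) * (u(k := u k + d)) j)" by (simp add: shift_eq)
      also have "\<dots> = real_of_int (c k) * (u k + d) + (\<Sum>j\<in>{0..n} - {k}. real_of_int (c j) * u j)"
        by (rule sum_split)
      also have "\<dots> = ?S + real_of_int (c k) * d"
        using sum_split[of "\<lambda>j. real_of_int (c j)" u "u k"] by (simp add: distrib_left)
      finally have eqS: "(\<Sum>j\<in>{0..n}. real_of_int (c j) * shift k d u j) = ?S + real_of_int (c k) * d" .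
      have "- P * (?S + real_of_int (c k) * d) / real q = - P * ?S / real q + (-1/2)"
        using ck P0 q0 by (simp add: d_def field_simps)
      moreover have "e_char (a - 1/2) = - e_char a" for a
        using e_char_add[of a "-1/2"] e_char_half by simp
      ultimately show ?thesis unfolding E_def e_q_def eqS
        by simp
    qed
    have Enorm: "norm (E u) \<le> 1" for u by (simp add: E_def e_q_def norm_e_char)
    have Em: "E \<in> borel_measurable (MM n)"
    proof -
      have "(\<lambda>u. - P * (\<Sum>j\<in>{0..n}. real_of_int (c j) * u j) / real q) \<in> borel_measurable (MM n)"
        by measurable
      from borel_measurable_continuous_on[OF cont_e_char this]
      show ?thesis unfolding E_def[abs_def] e_q_def .
    qed
    have Feq: "F u = (\<Prod>j\<in>{0..n}. Psi \<epsilon> P 0 (u j)) * HJ x0 J 0 (Lf u)" for u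
      by (simp add: F_def w_low_eq[OF e P0])
    have Fm: "F \<in> borel_measurable (MM n)"
    proof -
      note [measurable] = dchain_measurable[OF dchain_Psi, of \<epsilon> P 0] dchain_measurable[OF dchain_HJ, of x0 J 0]
      have "(\<lambda>u. (\<Prod>j\<in>{0..n}. Psi \<epsilon> P 0 (u j)) * HJ x0 J 0 (Lf u)) \<in> borel_measurable (MM n)"
        unfolding Lf_def by measurable
      then show ?thesis by (simp add: Feq[abs_def])
    qed
    have Fb: "\<bar>F u\<bar> \<le> MF" for u
    proof -
      have "\<bar>F u\<bar> = \<bar>\<Prod>j\<in>{0..n}. Psi \<epsilon> P 0 (u j)\<bar> * \<bar>HJ x0 J 0 (Lf u)\<bar>" by (simp add: Feq abs_mult)
      also have "\<dots> \<le> KPsi \<epsilon> 0 ^ (n+1) * (KH 0 / x0)"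
        using prod_Psi_bound[of "{0..n}" \<epsilon> P u] KH(2)[OF x00, of J 0 "Lf u"]
        by (intro mult_mono) (auto simp: KPsi_nonneg)
      finally show ?thesis by (simp add: MF_def)
    qed
    have Fsupp: "u \<in> SB n" if u: "u \<in> space (MM n)" and F: "F u \<noteq> 0" for u
    proof -
      have w: "w_low n \<epsilon> P u \<noteq> 0" using F by (auto simp: F_def)
      have "\<forall>j\<le>n. -1 \<le> u j \<and> u j \<le> 1" using wsupp[OF w] by (force simp: abs_less_iff)
      then show ?thesis using u by (auto simp: SB_def space_PiM PiE_def Pi_def)
    qed
    have Fchain: "\<exists>D. dchain D \<and> D 0 = (\<lambda>t. F (u(k := t))) \<and> (\<forall>t. \<bar>D N t\<bar> \<le> M)" for u
    proof -
      define A where "A = (\<Prod>j\<in>{0..n}-{k}. Psi \<epsilon> P 0 (u j))"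
      define \<alpha> where "\<alpha> = real_of_int (x k * y k) / (X * Yv)"
      define \<beta> where "\<beta> = (\<Sum>j\<in>{0..n}-{k}. real_of_int (x j * y j) * u j) / (X * Yv)"
      define D where "D m t = A * (\<Sum>i=0..m. real (m choose i) * Psi \<epsilon> P i t * (\<alpha>^(m-i) * HJ x0 J (m-i) (\<alpha>*t+\<beta>)))" for m t
      have dc: "dchain D" unfolding D_def[abs_def]
        by (intro dchain_scale dchain_mult dchain_Psi dchain_affine dchain_HJ)
      have D0: "D 0 = (\<lambda>t. F (u(k := t)))"
      proof
        fix t
        have "F (u(k:=t)) = (\<Prod>j\<in>{0..n}. Psi \<epsilon> P 0 ((u(k:=t)) j)) * HJ x0 J 0 (Lf (u(k:=t)))" by (rule Feq)
        also have "(\<Prod>j\<in>{0..n}. Psi \<epsilon> P 0 ((u(k:=t)) j)) = Psi \<epsilon> P 0 t * A"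
          unfolding A_def by (rule slice_prod[OF kn]) simp
        also have "Lf (u(k:=t)) = \<alpha> * t + \<beta>"
          unfolding Lf_def \<alpha>_def \<beta>_def sum_split by (simp add: add_divide_distrib)
        finally show "D 0 t = F (u(k:=t))" by (simp add: D_def mult_ac fun_upd_def)
      qed
      have al: "\<bar>\<alpha>\<bar> \<le> 1"
        using xyb[OF k(1)] X1 Y1 by (simp add: \<alpha>_def abs_divide divide_le_eq_1)
      have Ab: "\<bar>A\<bar> \<le> KPsi \<epsilon> 0 ^ n"
      proof -
        have "card ({0..n} - {k}) = n" using kn by simp
        then show ?thesis unfolding A_def using prod_Psi_bound[of "{0..n}-{k}" \<epsilon> P u] by simp
      qed
      have nb: "2 * (real n + 1) > 0" by simp
      have bound: "\<bar>D N t\<bar> \<le> M" for t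
      proof -
        have termb: "\<bar>real (N choose i) * Psi \<epsilon> P i t * (\<alpha>^(N-i) * HJ x0 J (N-i) (\<alpha>*t+\<beta>))\<bar>
            \<le> real (N choose i) * KPsi \<epsilon> i * (KH (N-i) * (2 * (real n + 1))^i / x0^(N+1))"
          if i: "i \<in> {0..N}" for i
        proof -
          have h1: "\<bar>\<alpha>^(N-i) * HJ x0 J (N-i) (\<alpha>*t+\<beta>)\<bar> \<le> 1 * (KH (N-i) / x0^(N-i+1))"
            unfolding abs_mult power_abs
            by (intro mult_mono power_le_one KH(2)[OF x00] al) auto
          have h2: "KH (N-i) / x0^(N-i+1) \<le> KH (N-i) * (2 * (real n + 1))^i / x0^(N+1)"
          proof -
            have "x0^i \<le> (2 * (real n + 1))^i" using x00 x0b by (intro power_mono) auto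
            then have "KH (N-i) * x0^i \<le> KH (N-i) * (2 * (real n + 1))^i"
              using KH(1) by (intro mult_left_mono) auto
            moreover have "x0^(N+1) = x0^i * x0^(N-i+1)" using i by (simp flip: power_add)
            ultimately show ?thesis using x00
              by (simp add: field_simps)
          qed
          show ?thesis unfolding abs_mult abs_of_nat
            using h1 h2 Psi_bound[of \<epsilon> P i t] KPsi_nonneg[of \<epsilon> i] KH(1)[of "N-i"]
            by (intro mult_mono) (auto simp: abs_mult)
        qed
        have "\<bar>D N t\<bar> = \<bar>A\<bar> * \<bar>\<Sum>i=0..N. real (N choose i) * Psi \<epsilon> P i t * (\<alpha>^(N-i) * HJ x0 J (N-i) (\<alpha>*t+\<beta>))\<bar>"
          unfolding D_def by (rule abs_mult)
        also have "\<dots> \<le> \<bar>A\<bar> * (\<Sum>i=0..N. \<bar>real (N choose i) * Psi \<epsilon> P i t * (\<alpha>^(N-i) * HJ x0 J (N-i) (\<alpha>*t+\<beta>))\<bar>)"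
          by (intro mult_left_mono sum_abs) auto
        also have "\<dots> \<le> KPsi \<epsilon> 0 ^ n * (\<Sum>i=0..N. real (N choose i) * KPsi \<epsilon> i * (KH (N-i) * (2 * (real n + 1))^i / x0^(N+1)))"
          by (intro mult_mono Ab sum_mono termb sum_nonneg) (auto simp: KPsi_nonneg)
        also have "\<dots> = M"
          unfolding M_def K1_def by (simp add: sum_divide_distrib sum_distrib_left mult_ac)
        finally show ?thesis .
      qed
      show ?thesis using dc D0 bound by blast
    qed
    have dec: "norm (integral\<^sup>L (MM n) (\<lambda>u. complex_of_real (F u) * E u))
           \<le> (1/2)^N * (\<bar>d\<bar>^N * M) * (real N + 1) * 2^(n+1)"
      by (rule decay[OF k(1) Em Eshift Enorm Fm Fb Fsupp Fchain])
    have r: "\<bar>d\<bar> / x0 = (1/2) * (X * Yv / (Q * s))"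
    proof -
      have "\<bar>d\<bar> = real q / (2 * P * s)" using k(2) P0 q0 by (simp add: d_def abs_divide abs_mult)
      then show ?thesis using P0 q0 Q1 s1 X1 Y1 by (simp add: x0_def P_def QQ[symmetric] field_simps)
    qed
    have "(1/2)^N * (\<bar>d\<bar>^N * M) * (real N + 1) * 2^(n+1)
        = (1/2)^N * (\<bar>d\<bar> / x0)^N * (1 / x0) * K1 n N \<epsilon> * (real N + 1) * 2^(n+1)"
      using x00 by (simp add: M_def power_divide field_simps)
    also have "\<dots> = Cst n N \<epsilon> * (Q / real q) * (X * Yv / (Q * s)) ^ N"
    proof -
      have f4: "(2::real)^N * 2^N = 4^N" by (simp flip: power_mult_distrib)
      show ?thesis unfolding r Cst_def using q0 Q1 f4 by (simp add: x0_def power_mult_distrib field_simps)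
    qed
    finally show ?thesis using dec Ieq
      by (simp add: X_def Yv_def Q_def s_def)
  qed
qed
theorem mainTheorem3:
  fixes n N :: nat and \<epsilon> :: real
  assumes "n \<ge> 2" and "0 < \<epsilon>" and "\<epsilon> < 1"
  shows "\<exists>C::real. \<forall>(i0::nat) (j0::nat) (B::real) (x::nat \<Rightarrow> int) (y::nat \<Rightarrow> int) (q::nat) (c::nat \<Rightarrow> int).
    i0 \<le> n \<longrightarrow> j0 \<le> n \<longrightarrow> B \<ge> 1 \<longrightarrow> x i0 \<ge> 1 \<longrightarrow> y j0 \<ge> 1 \<longrightarrow>
    (\<forall>i\<le>n. \<bar>x i\<bar> \<le> x i0) \<longrightarrow> (\<forall>j\<le>n. \<bar>y j\<bar> \<le> y j0) \<longrightarrow>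
    q \<ge> 1 \<longrightarrow> (\<exists>k\<le>n. c k \<noteq> 0) \<longrightarrow>
    norm (I_int n \<epsilon> B x y i0 j0 q c)
      \<le> C * (sqrt B / real q) *
         (real_of_int (x i0 * y j0) / (sqrt B * supnorm n c)) ^ N"
  proof (intro exI[of _ "Cst n N \<epsilon>"] allI impI)
  fix i0 j0 :: nat and B :: real and x y c :: "nat \<Rightarrow> int" and q :: nat
  assume h: "i0 \<le> n" "j0 \<le> n" "B \<ge> 1" "x i0 \<ge> 1" "y j0 \<ge> 1"
    "\<forall>i\<le>n. \<bar>x i\<bar> \<le> x i0" "\<forall>j\<le>n. \<bar>y j\<bar> \<le> y j0" "q \<ge> 1" "\<exists>k\<le>n. c k \<noteq> 0"
  show "norm (I_int n \<epsilon> B x y i0 j0 q c)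
      \<le> Cst n N \<epsilon> * (sqrt B / real q) *
         (real_of_int (x i0 * y j0) / (sqrt B * supnorm n c)) ^ N"
    by (rule main_bound[OF assms(2) h])
qed

end
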